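(* Let $x_0\in\mathbb{R}$, $T>0$, $M\ge2$, and let $f_1:(0,i]\to\mathbb{C}$ satisfy $f_1(k)=0$ for $k\in[\tfrac i2,i]$, $f_1\in C^\infty((0,i))$, and $\int_1^\infty\frac{|f_1(i/y)|}{y}dy\le\frac1M$ (these are exactly the conditions imposed on $f_1$ by the standing hypotheses below). Then for all $j\in\mathbb{N}_{>0}$, $x\in\mathbb{R}$ and $t\in[0,T)$, $$\Big|\partial_x m_j^{(1)}(x,t)\Big|\le\frac{1}{M^{j-1}}\int_1^\infty e^{-\frac{T-t}{4}y^2}|y f_1(\tfrac iy)|\,dy+\frac{j-1}{M^{j-2}}\Big(\int_1^\infty e^{-\frac{T-t}{4}y^2}|f_1(\tfrac iy)|\,dy\Big)^2.$$
   Context: Standing hypotheses: $r_1:\hat\Gamma_1\to\mathbb{C}$, $r_2:\hat\Gamma_4\setminus\{\omega^2,-\omega^2\}\to\mathbb{C}$ with $r_1\in C^\infty(\hat\Gamma_1)$, $r_2\in C^\infty(\hat\Gamma_4\setminus\{\omega^2,-\omega^2\})$, rapid decay of $r_1$ on $\Gamma_1$ and $r_2$ on $\Gamma_4$ together with all derivatives, $r_2(k)=\tilde r(k)\overline{r_1(\bar k^{-1})}$, $r_1=r_2=0$ on $\partial\mathbb{D}$, $r_1=0$ on $[-i,-i\infty)$, and $r_1(k)=f_1(k)e^{-\frac{x_0}{2k}}e^{\frac{T}{4k^2}}$ on $(0,i]$. Notation: $\omega=e^{2\pi i/3}$, $\mathbb{D}$ the open unit disk, $(a,b)$ the open segment/ray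 oriented from $a$ to $b$; $\Gamma_1=(0,i)\cup(-i,-i\infty)$, $\Gamma_4=(0,-i)\cup(i,i\infty)$, $\hat\Gamma_j=\Gamma_j\cup\partial\mathbb{D}$; $\Gamma_{1'}=(-i,-i\infty)$, $\Gamma_{4'}=(i,i\infty)$, $\tilde\Gamma=(e^{-\pi i/6},e^{-\pi i/6}\infty)\cup(e^{5\pi i/6},e^{5\pi i/6}\infty)$; $\tilde r(k)=\frac{\omega^2-k^2}{1-\omega^2k^2}$; $f_2(k)=\tilde r(k)\overline{f_1(\bar k^{-1})}$ on $(i,i\infty)$; $\tilde f_0=f_1(1/\cdot)$ on $\Gamma_{1'}$, $\tilde f_0=f_2$ on $\Gamma_{4'}$; $\tilde h_0(x,t,k)=\tilde f_0(k)e^{-\frac{x}{2k}+\frac{t}{4k^2}}$. For $k_1\in\tilde\Gamma$: $F(x,t,k,k_1)=e^{\frac{x-x_0}{2}\omega k_1}e^{\frac{T-t}{4}(\omega k_1)^2}\big(\frac{\omega^2}{\omega^2k_1-k}-\frac{\omega/k_1^2}{\frac{1}{\omega^2k_1}-k}\big)\frac{\tilde h_0(x,t,\omega k_1)}{2\pi i}$ and $F^{(1)}(x,t,k_1)=-e^{\frac{x-x_0}{2}\omega k_1}e^{\frac{T-t}{4}(\omega k_1)^2}\big(\omega^2-\frac{\omega}{k_1^2}\big)\frac{\tilde h_0(x,t,\omega k_1)}{2\pi i}$. Define $m_j^{(1)}(x,t)=\int_{\tilde\Gamma}\cdots\int_{\tilde\Gamma}F^{(1)}(x,t,k_1)F(x,t,k_1,k_2)\cdots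 F(x,t,k_{j-1},k_j)\,dk_1\cdots dk_j$ (contour integrals along oriented $\tilde\Gamma$). *)

theory Defs
  imports "HOL-Analysis.Analysis"
begin

definition omega :: complex where "omega = cis (2 * pi / 3)"

text \<open>Contour integral along the oriented contour
  tilde Gamma = (e^{-pi i/6}, e^{-pi i/6} infinity) union (e^{5 pi i/6}, e^{5 pi i/6} infinity),
  each ray oriented outwards, parametrised by k = c s, s in [1, infinity).\<close>
definition ray_int :: "complex \<Rightarrow> (complex \<Rightarrow> complex) \<Rightarrow> complex" where
  "ray_int c g = (LINT s:{1..}|lborel. g (c * of_real s) * c)"

definition tGamma_int :: "(complex \<Rightarrow> complex) \<Rightarrow> complex" where
  "tGamma_int g = ray_int (cis (- pi / 6)) g + ray_int (cis (5 * pi / 6)) g"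

definition r_tilde :: "complex \<Rightarrow> complex" where
  "r_tilde k = (omega\<^sup>2 - k\<^sup>2) / (1 - omega\<^sup>2 * k\<^sup>2)"

text \<open>f2 on (i, i infinity) and tilde f0 on Gamma_1' union Gamma_4' (0 elsewhere; never used there).\<close>
definition f2_of :: "(complex \<Rightarrow> complex) \<Rightarrow> complex \<Rightarrow> complex" where
  "f2_of f1 k = r_tilde k * cnj (f1 (1 / cnj k))"

definition tf0 :: "(complex \<Rightarrow> complex) \<Rightarrow> complex \<Rightarrow> complex" where
  "tf0 f1 k = (if Re k = 0 \<and> Im k < -1 then f1 (1 / k)
               else if Re k = 0 \<and> Im k > 1 then f2_of f1 k else 0)"

definition th0 :: "(complex \<Rightarrow> complex) \<Rightarrow> real \<Rightarrow> real \<Rightarrow> complex \<Rightarrow> complex" where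
  "th0 f1 x t k = tf0 f1 k * exp (- of_real x / (2 * k) + of_real t / (4 * k\<^sup>2))"

definition FF :: "(complex \<Rightarrow> complex) \<Rightarrow> real \<Rightarrow> real \<Rightarrow> real \<Rightarrow> real \<Rightarrow> complex \<Rightarrow> complex \<Rightarrow> complex" where
  "FF f1 x0 T x t k k1 =
     exp (of_real ((x - x0) / 2) * omega * k1) * exp (of_real ((T - t) / 4) * (omega * k1)\<^sup>2)
     * (omega\<^sup>2 / (omega\<^sup>2 * k1 - k) - (omega / k1\<^sup>2) / (1 / (omega\<^sup>2 * k1) - k))
     * th0 f1 x t (omega * k1) / (2 * pi * \<i>)"

definition FF1 :: "(complex \<Rightarrow> complex) \<Rightarrow> real \<Rightarrow> real \<Rightarrow> real \<Rightarrow> real \<Rightarrow> complex \<Rightarrow> complex" where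
  "FF1 f1 x0 T x t k1 =
     - exp (of_real ((x - x0) / 2) * omega * k1) * exp (of_real ((T - t) / 4) * (omega * k1)\<^sup>2)
     * (omega\<^sup>2 - omega / k1\<^sup>2)
     * th0 f1 x t (omega * k1) / (2 * pi * \<i>)"

primrec GG :: "(complex \<Rightarrow> complex) \<Rightarrow> real \<Rightarrow> real \<Rightarrow> real \<Rightarrow> real \<Rightarrow> nat \<Rightarrow> complex \<Rightarrow> complex" where
  "GG f1 x0 T x t 0 k = 1"
| "GG f1 x0 T x t (Suc n) k = tGamma_int (\<lambda>k'. FF f1 x0 T x t k k' * GG f1 x0 T x t n k')"

definition m1 :: "(complex \<Rightarrow> complex) \<Rightarrow> real \<Rightarrow> real \<Rightarrow> nat \<Rightarrow> real \<Rightarrow> real \<Rightarrow> complex" where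
  "m1 f1 x0 T j x t = tGamma_int (\<lambda>k1. FF1 f1 x0 T x t k1 * GG f1 x0 T x t (j - 1) k1)"

definition smooth_on_real :: "real set \<Rightarrow> (real \<Rightarrow> complex) \<Rightarrow> bool" where
  "smooth_on_real S g \<longleftrightarrow> (\<exists>D. D 0 = g \<and>
     (\<forall>n. \<forall>s\<in>S. (D n has_vector_derivative D (Suc n) s) (at s)))"

end

theory Submission
  imports Defs
begin


lemma DUI:
  fixes f f' :: "real \<Rightarrow> 'a \<Rightarrow> complex" and g :: "'a \<Rightarrow> real"
  assumes int: "\<And>x. integrable M (f x)"
    and der: "\<And>x s. ((\<lambda>x. f x s) has_vector_derivative f' x s) (at x)"
    and bnd: "\<And>x s. norm (f' x s) \<le> g s"
    and intg: "integrable M g"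
    and meas: "\<And>x. f' x \<in> borel_measurable M"
  shows "((\<lambda>x. integral\<^sup>L M (f x)) has_vector_derivative integral\<^sup>L M (f' x)) (at x)"
proof -
  have intf': "integrable M (f' y)" for y
    by (rule Bochner_Integration.integrable_bound[OF intg meas]) (auto intro: order_trans[OF bnd] abs_ge_self)
  have mvt: "norm (f y s - f x s) \<le> g s * norm (y - x)" for y s
  proof -
    have "norm (f y s - f x s) \<le> g s * norm (y - x)"
      apply (rule differentiable_bound[where S=UNIV and f="\<lambda>x. f x s" and f'="\<lambda>x h. h *\<^sub>R f' x s"])
      using der[where s=s] bnd[where s=s]
      by (auto simp: has_vector_derivative_def onorm_scaleR_left onorm_id)
    then show ?thesis .
  qed
  have lim: "((\<lambda>y. norm (integral\<^sup>L M (f y) - integral\<^sup>L M (f x) - (y - x) *\<^sub>R integral\<^sup>L M (f' x)) / norm (y - x)) \<longlongrightarrow> 0) (at x)"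
  proof (subst tendsto_at_iff_sequentially, intro allI impI)
    fix X :: "nat \<Rightarrow> real"
    assume X: "\<forall>i. X i \<in> UNIV - {x}" and Xl: "X \<longlonglongrightarrow> x"
    define h where "h n s = norm (f (X n) s - f x s - (X n - x) *\<^sub>R f' x s) / norm (X n - x)" for n s
    have eq: "norm (integral\<^sup>L M (f (X n)) - integral\<^sup>L M (f x) - (X n - x) *\<^sub>R integral\<^sup>L M (f' x)) / norm (X n - x)
        \<le> integral\<^sup>L M (h n)" for n
    proof -
      have "integral\<^sup>L M (f (X n)) - integral\<^sup>L M (f x) - (X n - x) *\<^sub>R integral\<^sup>L M (f' x)
          = integral\<^sup>L M (\<lambda>s. f (X n) s - f x s - (X n - x) *\<^sub>R f' x s)"
        using int intf' by simp
      then have "norm (integral\<^sup>L M (f (X n)) - integral\<^sup>L M (f x) - (X n - x) *\<^sub>R integral\<^sup>L M (f' x))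
          \<le> integral\<^sup>L M (\<lambda>s. norm (f (X n) s - f x s - (X n - x) *\<^sub>R f' x s))"
        by (simp add: integral_norm_bound)
      then show ?thesis unfolding h_def
        by (simp add: divide_right_mono)
    qed
    have "(\<lambda>n. integral\<^sup>L M (h n)) \<longlonglongrightarrow> integral\<^sup>L M (\<lambda>s. 0)"
    proof (rule integral_dominated_convergence[where w="\<lambda>s. 2 * g s"])
      show "(\<lambda>s. 0::real) \<in> borel_measurable M" by simp
      show "\<And>n. h n \<in> borel_measurable M" unfolding h_def
        using int intf' by (intro borel_measurable_divide borel_measurable_norm) auto
      show "integrable M (\<lambda>s. 2 * g s)" using intg by simp
      show "AE s in M. (\<lambda>n. h n s) \<longlonglongrightarrow> 0"
      proof (rule AE_I2)
        fix s
        have d: "((\<lambda>y. norm (f y s - f x s - (y - x) *\<^sub>R f' x s) / norm (y - x)) \<longlongrightarrow> 0) (at x)"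
          using der[where x=x and s=s] unfolding has_vector_derivative_def has_derivative_iff_norm by auto
        show "(\<lambda>n. h n s) \<longlonglongrightarrow> 0"
          using d[unfolded tendsto_at_iff_sequentially] X Xl unfolding h_def comp_def by auto
      qed
      show "AE s in M. norm (h n s) \<le> 2 * g s" for n
      proof (rule AE_I2)
        fix s
        have xn: "X n \<noteq> x" using X by auto
        have "norm (f (X n) s - f x s - (X n - x) *\<^sub>R f' x s) \<le> norm (f (X n) s - f x s) + norm ((X n - x) *\<^sub>R f' x s)"
          by (rule norm_triangle_ineq4)
        also have "\<dots> \<le> g s * norm (X n - x) + g s * norm (X n - x)"
        proof -
          have "cmod (f' x s) * norm (X n - x) \<le> g s * norm (X n - x)"
            using bnd[where x=x and s=s] by (rule mult_right_mono) simp
          then show ?thesis using mvt[of "X n" s] by (simp add: mult.commute)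
        qed
        finally have "norm (f (X n) s - f x s - (X n - x) *\<^sub>R f' x s) \<le> (2 * g s) * norm (X n - x)" by simp
        then show "norm (h n s) \<le> 2 * g s" unfolding h_def using xn
          by (simp add: divide_le_eq)
      qed
    qed
    then have L: "(\<lambda>n. integral\<^sup>L M (h n)) \<longlonglongrightarrow> 0" by simp
    show "((\<lambda>y. norm (integral\<^sup>L M (f y) - integral\<^sup>L M (f x) - (y - x) *\<^sub>R integral\<^sup>L M (f' x)) / norm (y - x)) \<circ> X) \<longlonglongrightarrow> 0"
      unfolding comp_def
      by (rule tendsto_sandwich[OF _ _ tendsto_const L]) (auto intro!: always_eventually eq[unfolded real_norm_def])
  qed
  show ?thesis
    unfolding has_vector_derivative_def has_derivative_iff_norm
    using lim by (auto intro: bounded_linear_scaleR_left)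
qed


definition c1 :: complex where "c1 = cis (- pi / 6)"

lemma sqrt3sq: "sqrt 3 * sqrt 3 = (3::real)" by simp

lemma omega_explicit: "omega = Complex (-1/2) (sqrt 3 / 2)"
proof -
  have "cos (2 * pi / 3) = - 1/2"
  proof -
    have "2 * pi / 3 = pi - pi / 3" by simp
    then show ?thesis by (simp only: cos_pi_minus cos_60)
  qed
  moreover have "sin (2 * pi / 3) = sqrt 3 / 2"
  proof -
    have "2 * pi / 3 = pi - pi / 3" by simp
    then show ?thesis by (simp only: sin_pi_minus sin_60)
  qed
  ultimately show ?thesis unfolding omega_def cis.ctr by simp
qed

lemma c1_explicit: "c1 = Complex (sqrt 3 / 2) (- 1/2)"
  unfolding c1_def cis.ctr using cos_30 sin_30 by simp

lemma c2_explicit: "cis (5 * pi / 6) = - c1"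
proof -
  have "cis (5 * pi / 6) = cis (- pi / 6) * cis pi" unfolding cis_mult by (simp add: field_simps)
  then show ?thesis unfolding c1_def by simp
qed

lemma norm_ge_sq: "(a::real) \<ge> 0 \<Longrightarrow> a^2 \<le> Re z ^ 2 + Im z ^ 2 \<Longrightarrow> a \<le> cmod z"
  unfolding cmod_def by (rule real_le_rsqrt)

lemma kern1:
  fixes s s' sg sg' :: real
  assumes "sg = 1 \<or> sg = -1" "sg' = 1 \<or> sg' = -1" "s \<ge> 1" "s' \<ge> 1"
  shows "norm (omega^2 * (of_real sg' * c1 * of_real s') - of_real sg * c1 * of_real s) \<ge> s' / 2"
proof (rule norm_ge_sq)
  show "0 \<le> s'/2" using assms by simp
  have r: "Re (omega^2 * (of_real sg' * c1 * of_real s') - of_real sg * c1 * of_real s) = - sqrt 3 / 2 * (sg' * s' + sg * s)"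
    by (simp add: omega_explicit c1_explicit power2_eq_square algebra_simps)
  have i: "Im (omega^2 * (of_real sg' * c1 * of_real s') - of_real sg * c1 * of_real s) = - 1 / 2 * (sg' * s' - sg * s)"
    by (simp add: omega_explicit c1_explicit power2_eq_square algebra_simps)
  have sq: "sqrt 3 ^ 2 = (3::real)" by simp
  have e: "(- sqrt 3 / 2 * (sg' * s' + sg * s))^2 + (- 1 / 2 * (sg' * s' - sg * s))^2 = s' ^ 2 + s^2 + (sg * sg') * (s * s')"
  proof -
    have "(- sqrt 3 / 2 * (sg' * s' + sg * s))^2 = 3/4 * (sg' * s' + sg * s)^2"
      by (simp add: power_mult_distrib power_divide sq)
    then show ?thesis using assms(1,2) by (auto simp: power2_eq_square field_simps)
  qed
  have x: "(s - s'/2)^2 = s^2 - s * s' + s' ^ 2/4" by (simp add: power2_eq_square algebra_simps)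
  have p: "0 \<le> s * s'" "0 \<le> (s - s'/2)^2" "0 \<le> s' ^ 2" using assms by simp_all
  have "sg * sg' = 1 \<or> sg * sg' = -1" using assms(1,2) by auto
  then show "(s'/2)^2 \<le> (Re (omega^2 * (of_real sg' * c1 * of_real s') - of_real sg * c1 * of_real s)) ^ 2 + (Im (omega^2 * (of_real sg' * c1 * of_real s') - of_real sg * c1 * of_real s)) ^ 2"
    unfolding r i e using p x by (auto simp: power_divide) (use zero_le_power2[of s'] in linarith)
qed


lemma omega_c1: "omega * c1 = \<i>"
  by (simp add: omega_explicit c1_explicit complex_eq_iff field_simps)

lemma omega2_c1_c1: "omega^2 * c1 * c1 = -1"
  by (simp add: omega_explicit c1_explicit complex_eq_iff power2_eq_square field_simps)

lemma c1_sq: "c1^2 = - omega"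
  by (simp add: omega_explicit c1_explicit complex_eq_iff power2_eq_square field_simps)

lemma norm_c1[simp]: "norm c1 = 1"
  by (simp add: c1_def)

lemma norm_omega[simp]: "norm omega = 1"
  by (simp add: omega_def)

lemma omega_ray: "sg = 1 \<or> sg = -1 \<Longrightarrow> omega * (of_real sg * c1 * of_real s) = of_real (sg * s) * \<i>"
  using omega_c1 by (auto simp: algebra_simps)

lemma kern2:
  fixes s s' sg sg' :: real
  assumes "sg = 1 \<or> sg = -1" "sg' = 1 \<or> sg' = -1" "s \<ge> 1" "s' \<ge> 2"
  shows "norm (1 / (omega^2 * (of_real sg' * c1 * of_real s')) - of_real sg * c1 * of_real s) \<ge> 1 / 2"
proof -
  have inv: "1 / (omega^2 * (of_real sg' * c1 * of_real s')) = - c1 * of_real (sg' / s')"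
  proof -
    have e1: "of_real sg' * of_real sg' = (1::complex)" using assms(2) by auto
    have e2: "of_real s' * of_real (1/s') = (1::complex)" using assms(4)
      by (metis of_real_1 of_real_mult divide_self_if mult.commute times_divide_eq_left times_divide_eq_right mult_1_left not_numeral_le_zero order_trans zero_le_one)
    have e3: "of_real (sg' / s') = (of_real sg' * of_real (1/s') :: complex)"
      by (simp add: divide_inverse)
    have "(omega^2 * (of_real sg' * c1 * of_real s')) * (- c1 * of_real (sg' / s'))
       = - (omega^2 * c1 * c1) * (of_real sg' * of_real sg') * (of_real s' * of_real (1/s'))"
      unfolding e3 by algebra
    also have "\<dots> = 1" using e1 e2 omega2_c1_c1 by simp
    finally have "(omega^2 * (of_real sg' * c1 * of_real s')) * (- c1 * of_real (sg' / s')) = 1" .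
    then show ?thesis by (metis inverse_unique inverse_eq_divide)
  qed
  have "1 / (omega^2 * (of_real sg' * c1 * of_real s')) - of_real sg * c1 * of_real s = - c1 * of_real (sg' / s' + sg * s)"
    unfolding inv by (simp add: algebra_simps)
  then have "norm (1 / (omega^2 * (of_real sg' * c1 * of_real s')) - of_real sg * c1 * of_real s) = \<bar>sg' / s' + sg * s\<bar>"
    by (simp add: norm_mult del: of_real_add of_real_mult of_real_divide)
  moreover have "\<bar>sg' / s' + sg * s\<bar> \<ge> 1/2"
  proof -
    define u where "u = 1 / s'"
    have u: "u \<le> 1/2" "0 < u" using assms unfolding u_def by (simp_all add: field_simps)
    have "sg' / s' = sg' * u" unfolding u_def by simp
    then show ?thesis using assms(1,2,3) u by auto
  qed
  ultimately show ?thesis by simp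
qed

lemma kern_bound:
  fixes s s' sg sg' :: real
  assumes "sg = 1 \<or> sg = -1" "sg' = 1 \<or> sg' = -1" "s \<ge> 1" "s' \<ge> 2"
  defines "k \<equiv> of_real sg * c1 * of_real s" and "k1 \<equiv> of_real sg' * c1 * of_real s'"
  shows "norm (omega^2 / (omega^2 * k1 - k) - (omega / k1^2) / (1 / (omega^2 * k1) - k)) \<le> 3 / s'"
proof -
  have a: "norm (omega^2 * k1 - k) \<ge> s'/2" unfolding k_def k1_def
    by (rule kern1) (use assms in auto)
  have b: "norm (1 / (omega^2 * k1) - k) \<ge> 1/2" unfolding k_def k1_def
    by (rule kern2) (use assms in auto)
  have c: "norm (omega / k1^2) = 1 / s'^2"
    using assms unfolding k1_def by (auto simp: norm_divide norm_mult norm_power power_mult_distrib)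
  have "norm (omega^2 / (omega^2 * k1 - k)) \<le> 2 / s'"
  proof -
    have "norm (omega^2 / (omega^2 * k1 - k)) = 1 / norm (omega^2 * k1 - k)"
      by (simp add: norm_divide norm_power)
    also have "\<dots> \<le> 1 / (s'/2)" by (rule frac_le) (use a assms in auto)
    finally show ?thesis by simp
  qed
  moreover have "norm ((omega / k1^2) / (1 / (omega^2 * k1) - k)) \<le> 2 / s'^2"
  proof -
    have "norm ((omega / k1^2) / (1 / (omega^2 * k1) - k)) = (1 / s'^2) / norm (1 / (omega^2 * k1) - k)"
      by (subst norm_divide) (subst c, rule refl)
    also have "\<dots> \<le> (1 / s'^2) / (1/2)" by (rule frac_le) (use b assms in auto)
    finally show ?thesis by simp
  qed
  moreover have "2 / s'^2 \<le> 1 / s'" using assms by (simp add: field_simps power2_eq_square)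
  ultimately show ?thesis
    by (smt (verit) norm_triangle_ineq4 add_divide_distrib)
qed


lemma r_tilde_norm: "norm (r_tilde (of_real s * \<i>)) \<le> 1"
proof -
  have num: "omega\<^sup>2 - (of_real s * \<i>)\<^sup>2 = Complex (s^2 - 1/2) (- sqrt 3 / 2)"
    by (simp add: omega_explicit complex_eq_iff power2_eq_square field_simps)
  have den: "1 - omega\<^sup>2 * (of_real s * \<i>)\<^sup>2 = Complex (1 - s^2/2) (- sqrt 3 / 2 * s^2)"
    by (simp add: omega_explicit complex_eq_iff power2_eq_square field_simps)
  have sq: "sqrt 3 ^ 2 = (3::real)" by simp
  have "norm (Complex (s^2 - 1/2) (- sqrt 3 / 2)) = norm (Complex (1 - s^2/2) (- sqrt 3 / 2 * s^2))"
    unfolding cmod_def by (simp add: power_mult_distrib power_divide sq power2_eq_square field_simps)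
  then show ?thesis unfolding r_tilde_def num den norm_divide
    by (cases "norm (Complex (1 - s^2/2) (- sqrt 3 / 2 * s^2)) = 0") auto
qed


definition lam :: "complex \<Rightarrow> complex" where
  "lam k = omega * k / 2 - 1 / (2 * omega * k)"

definition kern :: "complex \<Rightarrow> complex \<Rightarrow> complex" where
  "kern k k1 = omega\<^sup>2 / (omega\<^sup>2 * k1 - k) - (omega / k1\<^sup>2) / (1 / (omega\<^sup>2 * k1) - k)"

definition CFg :: "real \<Rightarrow> real \<Rightarrow> real \<Rightarrow> complex \<Rightarrow> complex \<Rightarrow> complex \<Rightarrow> complex" where
  "CFg x0 T t k k1 tau = exp (- of_real x0 * (omega * k1 / 2)) * exp (of_real ((T - t) / 4) * (omega * k1)\<^sup>2)
     * kern k k1 * tau * exp (of_real t / (4 * (omega * k1)\<^sup>2)) / (2 * pi * \<i>)"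

definition CF1g :: "real \<Rightarrow> real \<Rightarrow> real \<Rightarrow> complex \<Rightarrow> complex \<Rightarrow> complex" where
  "CF1g x0 T t k1 tau = - exp (- of_real x0 * (omega * k1 / 2)) * exp (of_real ((T - t) / 4) * (omega * k1)\<^sup>2)
     * (omega\<^sup>2 - omega / k1\<^sup>2) * tau * exp (of_real t / (4 * (omega * k1)\<^sup>2)) / (2 * pi * \<i>)"

lemma argid: fixes w c :: complex shows
  "of_real ((x - x0) / 2) * w + (- of_real x / (2 * w) + c) = of_real x * (w / 2 - 1 / (2 * w)) + (- of_real x0 * (w / 2) + c)"
proof -
  have "- of_real x / (2 * w) = of_real x * (- (1 / (2 * w)))" by simp
  moreover have "of_real ((x - x0) / 2) * w = of_real x * (w / 2) - of_real x0 * (w/2)" by (simp add: field_simps)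
  ultimately show ?thesis by (simp add: algebra_simps)
qed

lemma exp_split:
  "exp (of_real ((x - x0) / 2) * omega * k1) * exp (- of_real x / (2 * (omega * k1)) + c)
   = exp (of_real x * lam k1) * (exp (- of_real x0 * (omega * k1 / 2)) * exp c)"
proof -
  have l: "lam k1 = (omega * k1) / 2 - 1 / (2 * (omega * k1))" unfolding lam_def by (simp only: mult.assoc)
  have m: "of_real ((x - x0) / 2) * omega * k1 = of_real ((x - x0) / 2) * (omega * k1)" by (simp only: mult.assoc)
  show ?thesis unfolding l m exp_add[symmetric] argid ..
qed

lemma rearr1: fixes a b k u c d :: complex shows "a * b * k * (u * c) / d = (a * c) * (b * k * u) / d"
  by (simp add: ac_simps)

lemma rearr2: fixes e e1 e2 b k u d :: complex shows "(e * (e1 * e2)) * (b * k * u) / d = e * (e1 * b * k * u * e2 / d)"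
  by (simp add: ac_simps)

lemma rearr3: fixes a b k u c d :: complex shows "- a * b * k * (u * c) / d = (a * c) * (b * k * u) / (- d)"
  by (simp add: ac_simps)

lemma rearr4: fixes e e1 e2 b k u d :: complex shows "(e * (e1 * e2)) * (b * k * u) / (- d) = e * (- e1 * b * k * u * e2 / d)"
  by (simp add: ac_simps)

lemma FF_eq: "FF f1 x0 T x t k k1 = exp (of_real x * lam k1) * CFg x0 T t k k1 (tf0 f1 (omega * k1))"
  unfolding FF_def th0_def CFg_def kern_def rearr1 exp_split rearr2 ..

lemma FF1_eq: "FF1 f1 x0 T x t k1 = exp (of_real x * lam k1) * CF1g x0 T t k1 (tf0 f1 (omega * k1))"
  unfolding FF1_def th0_def CF1g_def rearr3 exp_split rearr4 ..

lemma lam_ray: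
  assumes "sg = 1 \<or> sg = -1" "s > 0"
  shows "lam (of_real sg * c1 * of_real s) = \<i> * of_real (sg * (s / 2 + 1 / (2 * s)))"
proof -
  have "omega * (of_real sg * c1 * of_real s) = of_real (sg * s) * \<i>" by (rule omega_ray[OF assms(1)])
  then have "lam (of_real sg * c1 * of_real s) = of_real (sg * s) * \<i> / 2 - 1 / (2 * (of_real (sg * s) * \<i>))"
    unfolding lam_def by (simp only: mult.assoc[of 2 omega])
  also have "\<dots> = \<i> * of_real (sg * (s / 2 + 1 / (2 * s)))"
  proof -
    have "1 / (2 * (of_real (sg * s) * \<i>)) = - \<i> * of_real (sg / (2 * s))"
      using assms by (auto simp: field_simps)
    then show ?thesis using assms by (auto simp: algebra_simps)
  qed
  finally show ?thesis .
qed

lemma lam_ray_norm: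
  assumes "sg = 1 \<or> sg = -1" "s \<ge> 1"
  shows "norm (lam (of_real sg * c1 * of_real s)) \<le> s" and "Re (lam (of_real sg * c1 * of_real s)) = 0"
proof -
  have pos: "s > 0" using assms by simp
  have "1 * 1 \<le> s * s" by (rule mult_mono) (use assms in auto)
  then have "1 / (2 * s) \<le> s / 2" using assms by (simp add: field_simps)
  moreover have "norm (lam (of_real sg * c1 * of_real s)) = \<bar>sg\<bar> * \<bar>s / 2 + 1 / (2 * s)\<bar>"
    unfolding lam_ray[OF assms(1) pos] by (simp only: norm_mult norm_ii norm_of_real abs_mult)
  ultimately show "norm (lam (of_real sg * c1 * of_real s)) \<le> s"
    using assms by auto
  show "Re (lam (of_real sg * c1 * of_real s)) = 0"
    unfolding lam_ray[OF assms(1) pos] by (simp del: of_real_add of_real_mult of_real_divide)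
qed


definition phit :: "(complex \<Rightarrow> complex) \<Rightarrow> real \<Rightarrow> complex" where
  "phit f1 s = (if 1 \<le> s then f1 (\<i> / of_real s) else 0)"

lemma i_div: "s \<noteq> 0 \<Longrightarrow> \<i> / of_real s = \<i> * of_real (1 / s)"
  by (simp add: divide_inverse)

context
  fixes f1 :: "complex \<Rightarrow> complex"
  assumes hzero: "\<And>s. s \<in> {1/2..1} \<Longrightarrow> f1 (\<i> * of_real s) = 0"
    and hsmooth: "smooth_on_real {0<..<1} (\<lambda>s. f1 (\<i> * of_real s))"
begin

lemma phi_zero:
  assumes "1 \<le> s" "s \<le> 2"
  shows "f1 (\<i> / of_real s) = 0"
proof -
  have "1 / s \<in> {1/2..1}" using assms by (auto simp: field_simps)
  from hzero[OF this] show ?thesis by simp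
qed

lemma phit_zero:
  assumes "s \<le> 2"
  shows "phit f1 s = 0"
  using phi_zero assms unfolding phit_def by auto

lemma phit_cont:
  shows "continuous_on UNIV (phit f1)"
proof -
  obtain D where D0: "D 0 = (\<lambda>s. f1 (\<i> * of_real s))"
    and Dd: "\<And>n s. s \<in> {0<..<1} \<Longrightarrow> (D n has_vector_derivative D (Suc n) s) (at s)"
    using hsmooth unfolding smooth_on_real_def by blast
  have cg: "continuous_on {0<..<1} (\<lambda>s. f1 (\<i> * of_real s))"
    unfolding D0[symmetric]
    by (intro continuous_at_imp_continuous_on ballI) (rule has_vector_derivative_continuous[OF Dd[of _ 0]], simp)
  have c1: "continuous_on {..2} (phit f1)"
    by (rule continuous_on_cong[THEN iffD1, OF refl _ continuous_on_const[of _ 0]])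
       (auto intro: phit_zero)
  have "continuous_on {3/2..} ((\<lambda>s. f1 (\<i> * of_real s)) \<circ> (\<lambda>y. 1 / y))"
    by (rule continuous_on_compose[OF _ continuous_on_subset[OF cg]])
       (auto intro!: continuous_intros simp: field_simps)
  then have c2: "continuous_on {3/2..} (phit f1)"
    by (rule continuous_on_cong[THEN iffD1, OF refl, rotated]) (auto simp: phit_def)
  have "continuous_on ({..2} \<union> {3/2..}) (phit f1)"
    by (rule continuous_on_closed_Un[OF _ _ c1 c2]) auto
  moreover have "{..2} \<union> {3/2..} = (UNIV :: real set)" by auto
  ultimately show ?thesis by simp
qed

lemma tf0_ray:
  assumes sg: "sg = 1 \<or> sg = -1" and s: "1 \<le> s"
  shows "tf0 f1 (omega * (of_real sg * c1 * of_real s)) =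
    (if sg = 1 then r_tilde (of_real s * \<i>) * cnj (f1 (\<i> / of_real s)) else f1 (\<i> / of_real s))"
proof -
  have w: "omega * (of_real sg * c1 * of_real s) = of_real (sg * s) * \<i>" by (rule omega_ray[OF sg])
  show ?thesis
  proof (cases "s = 1")
    case True
    then have "f1 (\<i> / of_real s) = 0" using phi_zero[of 1] by simp
    then show ?thesis unfolding w tf0_def using True sg by auto
  next
    case False
    then have s1: "s > 1" using s by simp
    have a: "1 / cnj (of_real s * \<i>) = \<i> / of_real s" using s1
      by (simp add: field_simps)
    have b: "1 / (of_real (- s) * \<i>) = \<i> / of_real s" using s1
      by (simp add: field_simps)
    show ?thesis unfolding w tf0_def f2_of_def using s1 sg a b by auto
  qed
qed

lemma tf0_ray_bound:
  assumes sg: "sg = 1 \<or> sg = -1" and s: "1 \<le> s"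
  shows "norm (tf0 f1 (omega * (of_real sg * c1 * of_real s))) \<le> norm (f1 (\<i> / of_real s))"
    and "s \<le> 2 \<Longrightarrow> tf0 f1 (omega * (of_real sg * c1 * of_real s)) = 0"
proof -
  show "norm (tf0 f1 (omega * (of_real sg * c1 * of_real s))) \<le> norm (f1 (\<i> / of_real s))"
    unfolding tf0_ray[OF sg s]
    using r_tilde_norm[of s] by (auto simp: norm_mult intro: mult_left_le_one_le)
  show "s \<le> 2 \<Longrightarrow> tf0 f1 (omega * (of_real sg * c1 * of_real s)) = 0"
    unfolding tf0_ray[OF sg s] using phi_zero[OF s] by auto
qed

end


lemma norm_exp_imag: "norm (exp (- of_real x0 * (of_real r * \<i> / 2))) = 1"
  by (simp add: norm_exp_eq_Re)

lemma sq_ray: "sg = 1 \<or> sg = -1 \<Longrightarrow> (of_real (sg * s) * \<i>)\<^sup>2 = - of_real (s\<^sup>2)"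
  by (auto simp: power2_eq_square algebra_simps)

lemma norm_exp_T: "sg = 1 \<or> sg = -1 \<Longrightarrow> norm (exp (of_real ((T - t) / 4) * (of_real (sg * s) * \<i>)\<^sup>2)) = exp (- ((T - t) / 4) * s\<^sup>2)"
proof -
  assume a: "sg = 1 \<or> sg = -1"
  show ?thesis unfolding sq_ray[OF a] by (simp add: norm_exp_eq_Re del: of_real_power)
qed

lemma omega_nz: "omega \<noteq> 0"
  by (metis norm_omega norm_zero zero_neq_one)

lemma norm_exp_t: "sg = 1 \<or> sg = -1 \<Longrightarrow> t \<ge> 0 \<Longrightarrow> s \<noteq> 0 \<Longrightarrow> norm (exp (of_real t / (4 * (of_real (sg * s) * \<i>)\<^sup>2))) \<le> 1"
proof -
  assume a: "sg = 1 \<or> sg = -1" "t \<ge> 0" "s \<noteq> 0"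
  have "of_real t / (4 * (of_real (sg * s) * \<i>)\<^sup>2) = (of_real (- t / (4 * s\<^sup>2)) :: complex)"
    unfolding sq_ray[OF a(1)] using a by (simp del: of_real_power)
  then show ?thesis using a by (simp add: norm_exp_eq_Re)
qed

lemma norm_2pii: "norm (2 * pi * \<i>) = 2 * pi" by (simp add: norm_mult)

context
  fixes f1 :: "complex \<Rightarrow> complex" and x0 T t :: real
  assumes hzero: "\<And>s. s \<in> {1/2..1} \<Longrightarrow> f1 (\<i> * of_real s) = 0"
    and hsmooth: "smooth_on_real {0<..<1} (\<lambda>s. f1 (\<i> * of_real s))"
    and ht0: "0 \<le> t"
begin

lemma CF_bound:
  assumes sg: "sg = 1 \<or> sg = -1" and sg': "sg' = 1 \<or> sg' = -1" and s: "1 \<le> s" and s': "1 \<le> s'"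
  shows "norm (CFg x0 T t (of_real sg * c1 * of_real s) (of_real sg' * c1 * of_real s')
            (tf0 f1 (omega * (of_real sg' * c1 * of_real s'))))
     \<le> 3 / (2 * pi) * (exp (- ((T - t) / 4) * s'\<^sup>2) * norm (f1 (\<i> / of_real s'))) / s'"
proof (cases "s' \<le> 2")
  case True
  then have "tf0 f1 (omega * (of_real sg' * c1 * of_real s')) = 0"
    using tf0_ray_bound(2)[OF hzero hsmooth sg' s'] by simp
  then show ?thesis unfolding CFg_def using s' by simp
next
  case False
  then have s2: "s' \<ge> 2" by simp
  define k where "k = of_real sg * c1 * of_real s"
  define k1 where "k1 = of_real sg' * c1 * of_real s'"
  have w: "omega * k1 = of_real (sg' * s') * \<i>" unfolding k1_def by (rule omega_ray[OF sg'])
  have kb: "norm (kern k k1) \<le> 3 / s'" unfolding kern_def k_def k1_def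
    by (rule kern_bound[OF sg sg' s s2])
  have tb: "norm (tf0 f1 (omega * k1)) \<le> norm (f1 (\<i> / of_real s'))"
    unfolding k1_def by (rule tf0_ray_bound(1)[OF hzero hsmooth sg' s'])
  have e3: "norm (exp (of_real t / (4 * (omega * k1)\<^sup>2))) \<le> 1"
    unfolding w by (rule norm_exp_t[OF sg' ht0]) (use s' in simp)
  have "norm (CFg x0 T t k k1 (tf0 f1 (omega * k1)))
      = 1 * exp (- ((T - t) / 4) * s'\<^sup>2) * norm (kern k k1) * norm (tf0 f1 (omega * k1))
        * norm (exp (of_real t / (4 * (omega * k1)\<^sup>2))) / (2 * pi)"
    unfolding CFg_def norm_divide norm_2pii norm_mult
    unfolding w norm_exp_imag norm_exp_T[OF sg'] by simp
  also have "\<dots> \<le> 1 * exp (- ((T - t) / 4) * s'\<^sup>2) * (3 / s') * norm (f1 (\<i> / of_real s')) * 1 / (2 * pi)"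
    using s' by (intro divide_right_mono mult_mono mult_left_mono kb tb e3) auto
  also have "\<dots> = 3 / (2 * pi) * (exp (- ((T - t) / 4) * s'\<^sup>2) * norm (f1 (\<i> / of_real s'))) / s'"
    by (simp add: field_simps)
  finally show ?thesis unfolding k_def k1_def .
qed

lemma CF1_bound:
  assumes sg': "sg' = 1 \<or> sg' = -1" and s': "1 \<le> s'"
  shows "norm (CF1g x0 T t (of_real sg' * c1 * of_real s')
            (tf0 f1 (omega * (of_real sg' * c1 * of_real s'))))
     \<le> 1 / pi * (exp (- ((T - t) / 4) * s'\<^sup>2) * norm (f1 (\<i> / of_real s')))"
proof -
  define k1 where "k1 = of_real sg' * c1 * of_real s'"
  have w: "omega * k1 = of_real (sg' * s') * \<i>" unfolding k1_def by (rule omega_ray[OF sg'])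
  have k1sq: "k1\<^sup>2 = - omega * of_real (s'\<^sup>2)"
    unfolding k1_def using sg' c1_sq by (auto simp: power_mult_distrib)
  have kb: "norm (omega\<^sup>2 - omega / k1\<^sup>2) \<le> 2"
  proof -
    have "norm (omega / k1\<^sup>2) = 1 / s'\<^sup>2" unfolding k1sq using s' omega_nz
      by (simp add: norm_divide norm_mult del: of_real_power)
    also have "\<dots> \<le> 1" using s' by (simp add: field_simps one_le_power)
    finally have "norm (omega / k1\<^sup>2) \<le> 1" .
    moreover have "norm (omega\<^sup>2) = 1" by (simp add: norm_power)
    ultimately show ?thesis using norm_triangle_ineq4[of "omega\<^sup>2" "omega / k1\<^sup>2"] by simp
  qed
  have tb: "norm (tf0 f1 (omega * k1)) \<le> norm (f1 (\<i> / of_real s'))"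
    unfolding k1_def by (rule tf0_ray_bound(1)[OF hzero hsmooth sg' s'])
  have e3: "norm (exp (of_real t / (4 * (omega * k1)\<^sup>2))) \<le> 1"
    unfolding w by (rule norm_exp_t[OF sg' ht0]) (use s' in simp)
  have "norm (CF1g x0 T t k1 (tf0 f1 (omega * k1)))
      = 1 * exp (- ((T - t) / 4) * s'\<^sup>2) * norm (omega\<^sup>2 - omega / k1\<^sup>2) * norm (tf0 f1 (omega * k1))
        * norm (exp (of_real t / (4 * (omega * k1)\<^sup>2))) / (2 * pi)"
    unfolding CF1g_def norm_divide norm_2pii norm_mult norm_minus_cancel
    unfolding w norm_exp_imag norm_exp_T[OF sg'] by simp
  also have "\<dots> \<le> 1 * exp (- ((T - t) / 4) * s'\<^sup>2) * 2 * norm (f1 (\<i> / of_real s')) * 1 / (2 * pi)"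
    using s' by (intro divide_right_mono mult_mono mult_left_mono kb tb e3) auto
  also have "\<dots> = 1 / pi * (exp (- ((T - t) / 4) * s'\<^sup>2) * norm (f1 (\<i> / of_real s')))"
    by (simp add: field_simps)
  finally show ?thesis unfolding k1_def .
qed

end


lemma exp_sq_bound:
  fixes c s :: real assumes c: "c > 0" and s: "s \<ge> 1"
  shows "s\<^sup>2 * exp (- c * s\<^sup>2) \<le> 1 / c" and "s * exp (- c * s\<^sup>2) \<le> 1 / c"
proof -
  have "c * s\<^sup>2 \<le> exp (c * s\<^sup>2)" using exp_ge_add_one_self[of "c * s\<^sup>2"] by linarith
  then have "c * (s\<^sup>2 * exp (- c * s\<^sup>2)) \<le> 1"
    by (simp add: exp_minus field_simps)
  then show a: "s\<^sup>2 * exp (- c * s\<^sup>2) \<le> 1 / c" using c by (simp add: field_simps)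
  have "s * exp (- c * s\<^sup>2) \<le> s\<^sup>2 * exp (- c * s\<^sup>2)"
    using s by (intro mult_right_mono) (auto simp: power2_eq_square)
  then show "s * exp (- c * s\<^sup>2) \<le> 1 / c" using a by linarith
qed

definition rayI :: "real \<Rightarrow> (complex \<Rightarrow> complex) \<Rightarrow> complex" where
  "rayI sg g = integral\<^sup>L lborel (\<lambda>s. indicator {1..} s *\<^sub>R (g (of_real sg * c1 * of_real s) * (of_real sg * c1)))"

lemma tG_eq: "tGamma_int g = rayI 1 g + rayI (-1) g"
proof -
  have a: "cis (- pi / 6) = of_real 1 * c1" by (simp add: c1_def)
  have b: "cis (5 * pi / 6) = of_real (-1) * c1" by (simp add: c2_explicit)
  show ?thesis unfolding tGamma_int_def ray_int_def set_lebesgue_integral_def rayI_def a b ..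
qed

lemma exp_lam_der: fixes L :: complex shows "((\<lambda>x. exp (of_real x * L)) has_vector_derivative (L * exp (of_real x * L))) (at x)"
proof -
  have "((\<lambda>z. exp (z * L)) has_field_derivative (exp (of_real x * L) * L)) (at (of_real x))"
    by (auto intro!: derivative_eq_intros)
  from has_vector_derivative_real_field[OF this] show ?thesis by (simp add: mult.commute)
qed

lemma norm_exp_lam: "sg = 1 \<or> sg = -1 \<Longrightarrow> 1 \<le> s \<Longrightarrow> norm (exp (of_real x * lam (of_real sg * c1 * of_real s))) = 1"
  using lam_ray_norm(2)[of sg s] by (simp add: norm_exp_eq_Re)

lemma ray_generic:
  fixes C :: "complex \<Rightarrow> complex" and G Dg :: "real \<Rightarrow> complex \<Rightarrow> complex" and B :: "real \<Rightarrow> real"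
  assumes sg': "sg' = 1 \<or> sg' = -1"
    and Gder: "\<And>x s'. s' \<ge> 1 \<Longrightarrow> ((\<lambda>x. G x (of_real sg' * c1 * of_real s')) has_vector_derivative Dg x (of_real sg' * c1 * of_real s')) (at x)"
    and Gb: "\<And>x s'. s' \<ge> 1 \<Longrightarrow> norm (G x (of_real sg' * c1 * of_real s')) \<le> gB"
    and Db: "\<And>x s'. s' \<ge> 1 \<Longrightarrow> norm (Dg x (of_real sg' * c1 * of_real s')) \<le> dB"
    and Gm[measurable]: "\<And>x. (\<lambda>s'. G x (of_real sg' * c1 * of_real s')) \<in> borel_measurable borel"
    and Dm[measurable]: "\<And>x. (\<lambda>s'. Dg x (of_real sg' * c1 * of_real s')) \<in> borel_measurable borel"
    and Cb: "\<And>s'. s' \<ge> 1 \<Longrightarrow> norm (C (of_real sg' * c1 * of_real s')) \<le> B s'"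
    and Cm[measurable]: "(\<lambda>s'. indicator {1..} s' *\<^sub>R C (of_real sg' * c1 * of_real s')) \<in> borel_measurable borel"
    and Bi: "integrable lborel (\<lambda>s'. indicator {1..} s' * B s')"
    and Bsi: "integrable lborel (\<lambda>s'. indicator {1..} s' * (s' * B s'))"
  shows "((\<lambda>x. rayI sg' (\<lambda>k'. exp (of_real x * lam k') * C k' * G x k')) has_vector_derivative
           rayI sg' (\<lambda>k'. lam k' * (exp (of_real x * lam k') * C k') * G x k' + exp (of_real x * lam k') * C k' * Dg x k')) (at x)"
    and "norm (rayI sg' (\<lambda>k'. exp (of_real x * lam k') * C k' * G x k')) \<le> gB * integral\<^sup>L lborel (\<lambda>s'. indicator {1..} s' * B s')"
    and "norm (rayI sg' (\<lambda>k'. lam k' * (exp (of_real x * lam k') * C k') * G x k' + exp (of_real x * lam k') * C k' * Dg x k'))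
         \<le> gB * integral\<^sup>L lborel (\<lambda>s'. indicator {1..} s' * (s' * B s')) + dB * integral\<^sup>L lborel (\<lambda>s'. indicator {1..} s' * B s')"
proof -
  define cc where "cc s' = of_real sg' * c1 * of_real s'" for s'
  define E where "E x s' = exp (of_real x * lam (cc s'))" for x s'
  define fI where "fI x s' = indicator {1..} s' *\<^sub>R (E x s' * C (cc s') * G x (cc s') * (of_real sg' * c1))" for x s'
  define fD where "fD x s' = indicator {1..} s' *\<^sub>R ((lam (cc s') * (E x s' * C (cc s')) * G x (cc s') + E x s' * C (cc s') * Dg x (cc s')) * (of_real sg' * c1))" for x s'
  define gf where "gf s' = indicator {1..} s' * (gB * (s' * B s') + dB * B s')" for s'
  have rI: "rayI sg' (\<lambda>k'. exp (of_real x * lam k') * C k' * G x k') = integral\<^sup>L lborel (fI x)" for x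
    unfolding rayI_def fI_def E_def cc_def ..
  have rD: "rayI sg' (\<lambda>k'. lam k' * (exp (of_real x * lam k') * C k') * G x k' + exp (of_real x * lam k') * C k' * Dg x k') = integral\<^sup>L lborel (fD x)" for x
    unfolding rayI_def fD_def E_def cc_def ..
  have nE: "norm (E x s') = 1" if "s' \<ge> 1" for x s'
    unfolding E_def cc_def by (rule norm_exp_lam[OF sg' that])
  have nc: "norm (of_real sg' * c1) = 1" using sg' by (auto simp: norm_mult)
  have gB0: "gB \<ge> 0" using Gb[of 1 0] by (meson norm_ge_zero order_trans order_refl)
  have dB0: "dB \<ge> 0" using Db[of 1 0] by (meson norm_ge_zero order_trans order_refl)
  have B0: "B s' \<ge> 0" if "s' \<ge> 1" for s' using Cb[OF that] norm_ge_zero order_trans by blast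
  have lamm[measurable]: "(\<lambda>s'. lam (cc s')) \<in> borel_measurable borel" unfolding lam_def cc_def by measurable
  have Gm'[measurable]: "(\<lambda>s'. G x (cc s')) \<in> borel_measurable borel" for x unfolding cc_def by (rule Gm)
  have Dm'[measurable]: "(\<lambda>s'. Dg x (cc s')) \<in> borel_measurable borel" for x unfolding cc_def by (rule Dm)
  have Cm'[measurable]: "(\<lambda>s'. indicator {1..} s' *\<^sub>R C (cc s')) \<in> borel_measurable borel" unfolding cc_def by (rule Cm)
  have fI_eq: "fI x = (\<lambda>s'. E x s' * (indicator {1..} s' *\<^sub>R C (cc s')) * G x (cc s') * (of_real sg' * c1))" for x
    unfolding fI_def by (auto simp: indicator_def)
  have fD_eq: "fD x = (\<lambda>s'. (lam (cc s') * (E x s' * (indicator {1..} s' *\<^sub>R C (cc s'))) * G x (cc s') + E x s' * (indicator {1..} s' *\<^sub>R C (cc s')) * Dg x (cc s')) * (of_real sg' * c1))" for x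
    unfolding fD_def by (auto simp: indicator_def)
  have fIm[measurable]: "fI x \<in> borel_measurable borel" for x unfolding fI_eq E_def by measurable
  have fDm[measurable]: "fD x \<in> borel_measurable borel" for x unfolding fD_eq E_def by measurable
  have fIb: "norm (fI x s') \<le> gB * (indicator {1..} s' * B s')" for x s'
  proof (cases "s' \<ge> 1")
    case True
    have "norm (fI x s') = norm (C (cc s')) * norm (G x (cc s'))"
      unfolding fI_def using True nE[OF True] nc by (simp add: norm_mult)
    also have "\<dots> \<le> B s' * gB" by (intro mult_mono Cb[OF True, folded cc_def] Gb[OF True, folded cc_def]) (use B0 True in auto)
    finally show ?thesis using True by (simp add: mult.commute)
  qed (simp add: fI_def)
  have fDb: "norm (fD x s') \<le> gf s'" for x s'
  proof (cases "s' \<ge> 1")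
    case True
    have "norm (fD x s') \<le> norm (lam (cc s')) * (norm (C (cc s')) * norm (G x (cc s'))) + norm (C (cc s')) * norm (Dg x (cc s'))"
      unfolding fD_def using True nE[OF True] nc by (simp add: norm_mult norm_triangle_ineq[THEN order_trans])
    also have "\<dots> \<le> s' * (B s' * gB) + B s' * dB"
      by (intro add_mono mult_mono lam_ray_norm(1)[OF sg' True, folded cc_def] Cb[OF True, folded cc_def]
            Gb[OF True, folded cc_def] Db[OF True, folded cc_def]) (use B0 True in auto)
    finally show ?thesis using True by (simp add: gf_def algebra_simps)
  qed (simp add: fD_def gf_def)
  have intI: "integrable lborel (fI x)" for x
    by (rule Bochner_Integration.integrable_bound[OF integrable_mult_right[OF Bi, of gB]])
       (use fIb gB0 in \<open>auto intro: order_trans[OF fIb] abs_ge_self\<close>)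
  have intg: "integrable lborel gf"
  proof -
    have "integrable lborel (\<lambda>s'. gB * (indicator {1..} s' * (s' * B s')) + dB * (indicator {1..} s' * B s'))"
      using Bi Bsi by auto
    then show ?thesis unfolding gf_def by (simp add: algebra_simps)
  qed
  have der: "((\<lambda>x. fI x s') has_vector_derivative fD x s') (at x)" for x s'
  proof (cases "s' \<ge> 1")
    case True
    have "((\<lambda>x. E x s' * C (cc s') * G x (cc s') * (of_real sg' * c1)) has_vector_derivative
          ((lam (cc s') * (E x s' * C (cc s')) * G x (cc s') + E x s' * C (cc s') * Dg x (cc s')) * (of_real sg' * c1))) (at x)"
    proof -
      have e: "((\<lambda>x. E x s' * C (cc s')) has_vector_derivative (lam (cc s') * E x s' * C (cc s'))) (at x)"
        unfolding E_def by (intro has_vector_derivative_mult_left exp_lam_der)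
      have "((\<lambda>x. E x s' * C (cc s') * G x (cc s')) has_vector_derivative
          (E x s' * C (cc s') * Dg x (cc s') + lam (cc s') * E x s' * C (cc s') * G x (cc s'))) (at x)"
        by (rule has_vector_derivative_mult[OF e Gder[OF True, folded cc_def]])
      from has_vector_derivative_mult_left[OF this, of "of_real sg' * c1"] show ?thesis
        by (simp add: algebra_simps)
    qed
    then show ?thesis unfolding fI_def fD_def using True by simp
  next
    case False
    then show ?thesis unfolding fI_def fD_def by simp
  qed
  have D: "((\<lambda>x. integral\<^sup>L lborel (fI x)) has_vector_derivative integral\<^sup>L lborel (fD x)) (at x)"
    by (rule DUI[OF intI der fDb intg]) simp
  then show "((\<lambda>x. rayI sg' (\<lambda>k'. exp (of_real x * lam k') * C k' * G x k')) has_vector_derivative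
           rayI sg' (\<lambda>k'. lam k' * (exp (of_real x * lam k') * C k') * G x k' + exp (of_real x * lam k') * C k' * Dg x k')) (at x)"
    unfolding rI rD .
  have "norm (integral\<^sup>L lborel (fI x)) \<le> integral\<^sup>L lborel (\<lambda>s'. gB * (indicator {1..} s' * B s'))"
    by (rule order_trans[OF integral_norm_bound integral_mono]) (use intI Bi fIb in auto)
  then show "norm (rayI sg' (\<lambda>k'. exp (of_real x * lam k') * C k' * G x k')) \<le> gB * integral\<^sup>L lborel (\<lambda>s'. indicator {1..} s' * B s')"
    unfolding rI by simp
  have intD: "integrable lborel (fD x)"
    by (rule Bochner_Integration.integrable_bound[OF intg]) (use fDb in \<open>auto intro: order_trans[OF fDb] abs_ge_self\<close>)
  have "norm (integral\<^sup>L lborel (fD x)) \<le> integral\<^sup>L lborel gf"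
    by (rule order_trans[OF integral_norm_bound integral_mono]) (use intD intg fDb in auto)
  also have "integral\<^sup>L lborel gf = gB * integral\<^sup>L lborel (\<lambda>s'. indicator {1..} s' * (s' * B s')) + dB * integral\<^sup>L lborel (\<lambda>s'. indicator {1..} s' * B s')"
  proof -
    have "gf = (\<lambda>s'. gB * (indicator {1..} s' * (s' * B s')) + dB * (indicator {1..} s' * B s'))"
      unfolding gf_def by (auto simp: algebra_simps)
    then show ?thesis using Bi Bsi by simp
  qed
  finally show "norm (rayI sg' (\<lambda>k'. lam k' * (exp (of_real x * lam k') * C k') * G x k' + exp (of_real x * lam k') * C k' * Dg x k'))
         \<le> gB * integral\<^sup>L lborel (\<lambda>s'. indicator {1..} s' * (s' * B s')) + dB * integral\<^sup>L lborel (\<lambda>s'. indicator {1..} s' * B s')"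
    unfolding rD .
qed


lemma cnj_meas[measurable]: "(cnj :: complex \<Rightarrow> complex) \<in> borel_measurable borel"
proof -
  have "continuous_on UNIV (\<lambda>x::complex. cnj x)" by (intro continuous_intros)
  then show ?thesis using borel_measurable_continuous_onI by (metis eta_contract_eq)
qed

lemma CFg_ind: "indicator A s *\<^sub>R CFg x0 T t k k1 tf = CFg x0 T t k k1 (indicator A s *\<^sub>R tf)"
  by (auto simp: CFg_def indicator_def)

lemma CF1g_ind: "indicator A s *\<^sub>R CF1g x0 T t k1 tf = CF1g x0 T t k1 (indicator A s *\<^sub>R tf)"
  by (auto simp: CF1g_def indicator_def)

definition CFr :: "real \<Rightarrow> real \<Rightarrow> real \<Rightarrow> complex \<Rightarrow> complex \<Rightarrow> complex" where
  "CFr x0' T' t' k1 tf = exp (- of_real x0' * (omega * k1 / 2)) * exp (of_real ((T' - t') / 4) * (omega * k1)\<^sup>2)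
     * tf * exp (of_real t' / (4 * (omega * k1)\<^sup>2)) / (2 * pi * \<i>)"

lemma CFg_split: "CFg x0' T' t' k k1 tf = kern k k1 * CFr x0' T' t' k1 tf"
  unfolding CFg_def CFr_def by (simp add: ac_simps)

lemma meas_int_kern: "(\<lambda>s. integral\<^sup>L lborel (\<lambda>s'. kern (of_real sg * c1 * of_real s) (of_real sg' * c1 * of_real s') * W s')) \<in> borel_measurable borel"
  if [measurable]: "W \<in> borel_measurable borel"
  unfolding kern_def by measurable


lemma CFm1: "(\<lambda>s'. CF1g x0 T t (of_real sg' * c1 * of_real s') (h s')) \<in> borel_measurable borel"
  if [measurable]: "h \<in> borel_measurable borel"
  unfolding CF1g_def by measurable

lemma CFm: "(\<lambda>s'. kern k (of_real sg' * c1 * of_real s') * CFr x0 T t (of_real sg' * c1 * of_real s') (h s')) \<in> borel_measurable borel"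
  if [measurable]: "h \<in> borel_measurable borel"
  unfolding kern_def CFr_def by measurable


context
  fixes f1 :: "complex \<Rightarrow> complex" and x0 T t M :: real
  assumes hzero: "\<And>s. s \<in> {1/2..1} \<Longrightarrow> f1 (\<i> * of_real s) = 0"
    and hsmooth: "smooth_on_real {0<..<1} (\<lambda>s. f1 (\<i> * of_real s))"
    and ht0: "0 \<le> t" and htT: "t < T" and hM: "M \<ge> 2"
    and hint: "(\<integral>\<^sup>+ y\<in>{1..}. ennreal (norm (f1 (\<i> / of_real y)) / y) \<partial>lborel) \<le> ennreal (1 / M)"
begin

definition ph :: "real \<Rightarrow> real" where "ph s = norm (f1 (\<i> / of_real s))"

lemma phit_meas[measurable]: "phit f1 \<in> borel_measurable borel"
  by (rule borel_measurable_continuous_onI[OF phit_cont[OF hzero hsmooth]])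

lemma ind_ph: fixes g :: "real \<Rightarrow> real" shows "indicator {1..} s * g (ph s) = indicator {1..} s * g (norm (phit f1 s))"
  by (auto simp: ph_def phit_def indicator_def)

lemma meas_ph1[measurable]: "(\<lambda>s. indicator {1..} s * (ph s / s)) \<in> borel_measurable borel"
  unfolding ind_ph[where g="\<lambda>u. u / s" for s] by measurable

lemma int_ph1: "integrable lborel (\<lambda>s. indicator {1..} s * (ph s / s))"
  and int_ph1_le: "integral\<^sup>L lborel (\<lambda>s. indicator {1..} s * (ph s / s)) \<le> 1 / M"
proof -
  have eq: "(\<integral>\<^sup>+ s. ennreal (indicator {1..} s * (ph s / s)) \<partial>lborel) = (\<integral>\<^sup>+ y\<in>{1..}. ennreal (norm (f1 (\<i> / of_real y)) / y) \<partial>lborel)"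
    by (intro nn_integral_cong) (auto simp: ph_def indicator_def)
  have fin: "(\<integral>\<^sup>+ s. ennreal (norm (indicator {1..} s * (ph s / s))) \<partial>lborel) < \<infinity>"
  proof -
    have "(\<integral>\<^sup>+ s. ennreal (norm (indicator {1..} s * (ph s / s))) \<partial>lborel) = (\<integral>\<^sup>+ s. ennreal (indicator {1..} s * (ph s / s)) \<partial>lborel)"
      by (intro nn_integral_cong) (auto simp: ph_def indicator_def)
    also have "\<dots> \<le> ennreal (1 / M)" using eq hint by simp
    also have "\<dots> < \<infinity>" by simp
    finally show ?thesis .
  qed
  show i: "integrable lborel (\<lambda>s. indicator {1..} s * (ph s / s))"
  proof (rule integrableI_bounded)
    show "(\<lambda>s. indicator {1..} s * (ph s / s)) \<in> borel_measurable lborel" using meas_ph1 by simp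
  qed (rule fin)
  have "ennreal (integral\<^sup>L lborel (\<lambda>s. indicator {1..} s * (ph s / s))) = (\<integral>\<^sup>+ s. ennreal (indicator {1..} s * (ph s / s)) \<partial>lborel)"
    by (rule nn_integral_eq_integral[symmetric]) (use i in \<open>auto simp: ph_def indicator_def\<close>)
  also have "\<dots> \<le> ennreal (1 / M)" using eq hint by simp
  finally show "integral\<^sup>L lborel (\<lambda>s. indicator {1..} s * (ph s / s)) \<le> 1 / M"
    using hM by (subst (asm) ennreal_le_iff) auto
qed

definition cT :: real where "cT = (T - t) / 4"

lemma cT_pos: "cT > 0" using htT by (simp add: cT_def)

lemma int_ph2: "integrable lborel (\<lambda>s. indicator {1..} s * (exp (- cT * s\<^sup>2) * ph s))"
proof (rule Bochner_Integration.integrable_bound[OF integrable_mult_right[OF int_ph1, of "1 / cT"]])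
  show "(\<lambda>s. indicator {1..} s * (exp (- cT * s\<^sup>2) * ph s)) \<in> borel_measurable lborel"
    unfolding ind_ph[where g="\<lambda>u. exp (- cT * s\<^sup>2) * u" for s] by measurable
  show "AE s in lborel. norm (indicator {1..} s * (exp (- cT * s\<^sup>2) * ph s)) \<le> norm (1 / cT * (indicator {1..} s * (ph s / s)))"
  proof (rule AE_I2)
    fix s :: real
    show "norm (indicator {1..} s * (exp (- cT * s\<^sup>2) * ph s)) \<le> norm (1 / cT * (indicator {1..} s * (ph s / s)))"
    proof (cases "s \<ge> 1")
      case True
      have "exp (- cT * s\<^sup>2) * ph s = (s * exp (- cT * s\<^sup>2)) * (ph s / s)" using True by (simp add: field_simps)
      also have "\<dots> \<le> 1 / cT * (ph s / s)"
        using exp_sq_bound(2)[OF cT_pos True] True by (intro mult_right_mono) (auto simp: ph_def)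
      finally show ?thesis using True cT_pos by (simp add: ph_def)
    qed simp
  qed
qed

lemma int_ph3: "integrable lborel (\<lambda>s. indicator {1..} s * (s * (exp (- cT * s\<^sup>2) * ph s)))"
proof (rule Bochner_Integration.integrable_bound[OF integrable_mult_right[OF int_ph1, of "1 / cT"]])
  show "(\<lambda>s. indicator {1..} s * (s * (exp (- cT * s\<^sup>2) * ph s))) \<in> borel_measurable lborel"
    unfolding ind_ph[where g="\<lambda>u. s * (exp (- cT * s\<^sup>2) * u)" for s] by measurable
  show "AE s in lborel. norm (indicator {1..} s * (s * (exp (- cT * s\<^sup>2) * ph s))) \<le> norm (1 / cT * (indicator {1..} s * (ph s / s)))"
  proof (rule AE_I2)
    fix s :: real
    show "norm (indicator {1..} s * (s * (exp (- cT * s\<^sup>2) * ph s))) \<le> norm (1 / cT * (indicator {1..} s * (ph s / s)))"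
    proof (cases "s \<ge> 1")
      case True
      have "s * (exp (- cT * s\<^sup>2) * ph s) = (s\<^sup>2 * exp (- cT * s\<^sup>2)) * (ph s / s)" using True by (simp add: field_simps power2_eq_square)
      also have "\<dots> \<le> 1 / cT * (ph s / s)"
        using exp_sq_bound(1)[OF cT_pos True] True by (intro mult_right_mono) (auto simp: ph_def)
      finally show ?thesis using True cT_pos by (simp add: ph_def)
    qed simp
  qed
qed


definition tau :: "real \<Rightarrow> real \<Rightarrow> complex" where
  "tau sg s = indicator {1..} s *\<^sub>R tf0 f1 (omega * (of_real sg * c1 * of_real s))"

lemma tau_eq:
  assumes sg: "sg = 1 \<or> sg = -1"
  shows "tau sg = (\<lambda>s. indicator {1..} s *\<^sub>R (if sg = 1 then r_tilde (of_real s * \<i>) * cnj (phit f1 s) else phit f1 s))"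
proof (rule ext)
  fix s
  show "tau sg s = indicator {1..} s *\<^sub>R (if sg = 1 then r_tilde (of_real s * \<i>) * cnj (phit f1 s) else phit f1 s)"
  proof (cases "1 \<le> s")
    case True
    have e: "tf0 f1 (omega * (of_real sg * c1 * of_real s)) =
      (if sg = 1 then r_tilde (of_real s * \<i>) * cnj (f1 (\<i> / of_real s)) else f1 (\<i> / of_real s))"
      by (rule tf0_ray[OF hzero hsmooth sg True])
    show ?thesis unfolding tau_def e using True by (simp add: phit_def)
  next
    case False
    then show ?thesis by (simp add: tau_def)
  qed
qed

lemma tau_meas[measurable]: "tau 1 \<in> borel_measurable borel" "tau (-1) \<in> borel_measurable borel"
proof -
  have "tau 1 = (\<lambda>s. indicator {1..} s *\<^sub>R (r_tilde (of_real s * \<i>) * cnj (phit f1 s)))"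
    using tau_eq[of 1] by simp
  moreover have "(\<lambda>s. indicator {1..} s *\<^sub>R (r_tilde (of_real s * \<i>) * cnj (phit f1 s))) \<in> borel_measurable borel"
    unfolding r_tilde_def by measurable
  ultimately show "tau 1 \<in> borel_measurable borel" by simp
  have "tau (-1) = (\<lambda>s. indicator {1..} s *\<^sub>R phit f1 s)"
    using tau_eq[of "-1"] by simp
  moreover have "(\<lambda>s. indicator {1..} s *\<^sub>R phit f1 s) \<in> borel_measurable borel"
    by measurable
  ultimately show "tau (-1) \<in> borel_measurable borel" by simp
qed

lemma FF_fun: "FF f1 x0 T x t k = (\<lambda>k'. exp (of_real x * lam k') * CFg x0 T t k k' (tf0 f1 (omega * k')))"
  by (rule ext) (rule FF_eq)

lemma FF1_fun: "FF1 f1 x0 T x t = (\<lambda>k'. exp (of_real x * lam k') * CF1g x0 T t k' (tf0 f1 (omega * k')))"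
  by (rule ext) (rule FF1_eq)

lemma rayI_FF: "rayI sg' (\<lambda>k'. FF f1 x0 T x t k k' * H k') =
  integral\<^sup>L lborel (\<lambda>s'. kern k (of_real sg' * c1 * of_real s') * (exp (of_real x * lam (of_real sg' * c1 * of_real s')) * CFr x0 T t (of_real sg' * c1 * of_real s') (tau sg' s')
     * H (of_real sg' * c1 * of_real s') * (of_real sg' * c1)))"
  unfolding rayI_def tau_def FF_fun CFg_split
proof (rule Bochner_Integration.integral_cong)
  fix s' :: real
  show "indicator {1..} s' *\<^sub>R (exp (of_real x * lam (of_real sg' * c1 * of_real s')) *
          (kern k (of_real sg' * c1 * of_real s') * CFr x0 T t (of_real sg' * c1 * of_real s') (tf0 f1 (omega * (of_real sg' * c1 * of_real s')))) *
          H (of_real sg' * c1 * of_real s') * (of_real sg' * c1)) =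
        kern k (of_real sg' * c1 * of_real s') * (exp (of_real x * lam (of_real sg' * c1 * of_real s')) *
          CFr x0 T t (of_real sg' * c1 * of_real s') (indicator {1..} s' *\<^sub>R tf0 f1 (omega * (of_real sg' * c1 * of_real s'))) *
          H (of_real sg' * c1 * of_real s') * (of_real sg' * c1))"
  proof (cases "s' \<ge> 1")
    case True
    then have i1: "indicator {1..} s' = (1::real)" by simp
    have r: "\<And>a b c d e :: complex. a * (b * c) * d * e = b * (a * c * d * e)" by (simp add: ac_simps)
    show ?thesis unfolding i1 scaleR_one r ..
  next
    case False
    then show ?thesis by (simp add: CFr_def)
  qed
qed simp

lemma rayI_FFD: "rayI sg' (\<lambda>k'. lam k' * FF f1 x0 T x t k k' * H1 k' + FF f1 x0 T x t k k' * H2 k') =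
  integral\<^sup>L lborel (\<lambda>s'. kern k (of_real sg' * c1 * of_real s') * ((lam (of_real sg' * c1 * of_real s') * (exp (of_real x * lam (of_real sg' * c1 * of_real s')) * CFr x0 T t (of_real sg' * c1 * of_real s') (tau sg' s'))
     * H1 (of_real sg' * c1 * of_real s') + exp (of_real x * lam (of_real sg' * c1 * of_real s')) * CFr x0 T t (of_real sg' * c1 * of_real s') (tau sg' s') * H2 (of_real sg' * c1 * of_real s')) * (of_real sg' * c1)))"
  unfolding rayI_def tau_def FF_fun CFg_split
proof (rule Bochner_Integration.integral_cong)
  fix s' :: real
  have r: "\<And>l e k r h1 h2 c :: complex. (l * (e * (k * r)) * h1 + e * (k * r) * h2) * c = k * ((l * (e * r) * h1 + e * r * h2) * c)"
    by (simp add: algebra_simps)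
  show "indicator {1..} s' *\<^sub>R ((lam (of_real sg' * c1 * of_real s') * (exp (of_real x * lam (of_real sg' * c1 * of_real s')) *
          (kern k (of_real sg' * c1 * of_real s') * CFr x0 T t (of_real sg' * c1 * of_real s') (tf0 f1 (omega * (of_real sg' * c1 * of_real s'))))) *
          H1 (of_real sg' * c1 * of_real s') + exp (of_real x * lam (of_real sg' * c1 * of_real s')) *
          (kern k (of_real sg' * c1 * of_real s') * CFr x0 T t (of_real sg' * c1 * of_real s') (tf0 f1 (omega * (of_real sg' * c1 * of_real s')))) *
          H2 (of_real sg' * c1 * of_real s')) * (of_real sg' * c1)) =
        kern k (of_real sg' * c1 * of_real s') * ((lam (of_real sg' * c1 * of_real s') * (exp (of_real x * lam (of_real sg' * c1 * of_real s')) *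
          CFr x0 T t (of_real sg' * c1 * of_real s') (indicator {1..} s' *\<^sub>R tf0 f1 (omega * (of_real sg' * c1 * of_real s')))) *
          H1 (of_real sg' * c1 * of_real s') + exp (of_real x * lam (of_real sg' * c1 * of_real s')) *
          CFr x0 T t (of_real sg' * c1 * of_real s') (indicator {1..} s' *\<^sub>R tf0 f1 (omega * (of_real sg' * c1 * of_real s'))) *
          H2 (of_real sg' * c1 * of_real s')) * (of_real sg' * c1))"
  proof (cases "s' \<ge> 1")
    case True
    then have i1: "indicator {1..} s' = (1::real)" by simp
    show ?thesis unfolding i1 scaleR_one r ..
  next
    case False
    then show ?thesis by (simp add: CFr_def)
  qed
qed simp

primrec DD :: "nat \<Rightarrow> real \<Rightarrow> complex \<Rightarrow> complex" where
  "DD 0 x k = 0"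
| "DD (Suc n) x k = tGamma_int (\<lambda>k'. lam k' * FF f1 x0 T x t k k' * GG f1 x0 T x t n k' + FF f1 x0 T x t k k' * DD n x k')"

lemma MEAS: "(\<lambda>s. GG f1 x0 T x t n (of_real sg * c1 * of_real s)) \<in> borel_measurable borel \<and>
             (\<lambda>s. DD n x (of_real sg * c1 * of_real s)) \<in> borel_measurable borel"
proof (induction n arbitrary: x sg)
  case 0
  then show ?case by simp
next
  case (Suc n)
  have [measurable]: "(\<lambda>s. GG f1 x0 T x t n (of_real 1 * c1 * of_real s)) \<in> borel_measurable borel"
     "(\<lambda>s. GG f1 x0 T x t n (of_real (-1) * c1 * of_real s)) \<in> borel_measurable borel"
     "(\<lambda>s. DD n x (of_real 1 * c1 * of_real s)) \<in> borel_measurable borel"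
     "(\<lambda>s. DD n x (of_real (-1) * c1 * of_real s)) \<in> borel_measurable borel"
    using Suc.IH by blast+
  show ?case
    unfolding GG.simps DD.simps tG_eq rayI_FF rayI_FFD
    by (intro conjI borel_measurable_add meas_int_kern) (unfold CFr_def lam_def, measurable)+
qed


definition Bf :: "real \<Rightarrow> real" where "Bf s = 3 / (2 * pi) * (exp (- cT * s\<^sup>2) * ph s) / s"
definition B1 :: "real \<Rightarrow> real" where "B1 s = 1 / pi * (exp (- cT * s\<^sup>2) * ph s)"
definition qq :: real where "qq = 2 * integral\<^sup>L lborel (\<lambda>s. indicator {1..} s * Bf s)"
definition AA :: real where "AA = 2 * integral\<^sup>L lborel (\<lambda>s. indicator {1..} s * (s * Bf s))"

lemma sBf_eq: "(\<lambda>s. indicator {1..} s * (s * Bf s)) = (\<lambda>s. 3 / (2 * pi) * (indicator {1..} s * (exp (- cT * s\<^sup>2) * ph s)))"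
  by (rule ext) (auto simp: Bf_def indicator_def)

lemma B1_eq: "(\<lambda>s. indicator {1..} s * B1 s) = (\<lambda>s. 1 / pi * (indicator {1..} s * (exp (- cT * s\<^sup>2) * ph s)))"
  by (rule ext) (auto simp: B1_def indicator_def)

lemma sB1_eq: "(\<lambda>s. indicator {1..} s * (s * B1 s)) = (\<lambda>s. 1 / pi * (indicator {1..} s * (s * (exp (- cT * s\<^sup>2) * ph s))))"
  by (rule ext) (auto simp: B1_def indicator_def)

lemma int_sBf: "integrable lborel (\<lambda>s. indicator {1..} s * (s * Bf s))"
  unfolding sBf_eq using int_ph2 by simp

lemma int_B1: "integrable lborel (\<lambda>s. indicator {1..} s * B1 s)"
  unfolding B1_eq using int_ph2 by simp

lemma int_sB1: "integrable lborel (\<lambda>s. indicator {1..} s * (s * B1 s))"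
  unfolding sB1_eq using int_ph3 by simp

lemma Bf_le: "indicator {1..} s * Bf s \<le> 3 / (2 * pi) * (indicator {1..} s * (ph s / s))"
proof (cases "s \<ge> 1")
  case True
  have "exp (- cT * s\<^sup>2) * ph s \<le> 1 * ph s"
    using cT_pos by (intro mult_right_mono) (auto simp: ph_def)
  then show ?thesis using True unfolding Bf_def by (auto intro!: divide_right_mono)
qed simp

lemma Bf_nonneg: "indicator {1..} s * Bf s \<ge> 0"
  by (auto simp: Bf_def ph_def indicator_def)

lemma int_Bf: "integrable lborel (\<lambda>s. indicator {1..} s * Bf s)"
proof (rule Bochner_Integration.integrable_bound[OF integrable_mult_right[OF int_ph1, of "3 / (2 * pi)"]])
  show "(\<lambda>s. indicator {1..} s * Bf s) \<in> borel_measurable lborel"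
    unfolding Bf_def ind_ph[where g="\<lambda>u. 3 / (2 * pi) * (exp (- cT * s\<^sup>2) * u) / s" for s] by measurable
  show "AE s in lborel. norm (indicator {1..} s * Bf s) \<le> norm (3 / (2 * pi) * (indicator {1..} s * (ph s / s)))"
  proof (rule AE_I2)
    fix s :: real
    have "norm (indicator {1..} s * Bf s) = indicator {1..} s * Bf s" using Bf_nonneg[of s] by simp
    also have "\<dots> \<le> 3 / (2 * pi) * (indicator {1..} s * (ph s / s))" by (rule Bf_le)
    also have "\<dots> \<le> norm (3 / (2 * pi) * (indicator {1..} s * (ph s / s)))" by (simp only: real_norm_def abs_ge_self)
    finally show "norm (indicator {1..} s * Bf s) \<le> norm (3 / (2 * pi) * (indicator {1..} s * (ph s / s)))" .
  qed
qed

lemma qq_nonneg: "qq \<ge> 0"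
  unfolding qq_def using Bf_nonneg by (auto intro!: integral_nonneg_AE)

lemma qq_le: "qq \<le> 3 / pi * (1 / M)"
proof -
  have "integral\<^sup>L lborel (\<lambda>s. indicator {1..} s * Bf s) \<le> integral\<^sup>L lborel (\<lambda>s. 3 / (2 * pi) * (indicator {1..} s * (ph s / s)))"
    by (rule integral_mono[OF int_Bf integrable_mult_right[OF int_ph1] Bf_le])
  also have "\<dots> = 3 / (2 * pi) * integral\<^sup>L lborel (\<lambda>s. indicator {1..} s * (ph s / s))" by (rule integral_mult_right_zero)
  also have "\<dots> \<le> 3 / (2 * pi) * (1 / M)" using int_ph1_le by (intro mult_left_mono) auto
  finally have X: "integral\<^sup>L lborel (\<lambda>s. indicator {1..} s * Bf s) \<le> 3 / (2 * pi) * (1 / M)" .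
  have "3 / pi * (1 / M) = 2 * (3 / (2 * pi) * (1 / M))" by simp
  then show ?thesis unfolding qq_def using X by linarith
qed

lemma AA_nonneg: "AA \<ge> 0"
  unfolding AA_def sBf_eq by (auto intro!: integral_nonneg_AE simp: ph_def indicator_def)

lemma CF_Bf:
  assumes "sg = 1 \<or> sg = -1" "sg' = 1 \<or> sg' = -1" "1 \<le> s" "1 \<le> s'"
  shows "norm (CFg x0 T t (of_real sg * c1 * of_real s) (of_real sg' * c1 * of_real s') (tf0 f1 (omega * (of_real sg' * c1 * of_real s')))) \<le> Bf s'"
  using CF_bound[OF hzero hsmooth ht0 assms] unfolding Bf_def cT_def ph_def .

lemma CF1_B1:
  assumes "sg' = 1 \<or> sg' = -1" "1 \<le> s'"
  shows "norm (CF1g x0 T t (of_real sg' * c1 * of_real s') (tf0 f1 (omega * (of_real sg' * c1 * of_real s')))) \<le> B1 s'"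
  using CF1_bound[OF hzero hsmooth ht0 assms] unfolding B1_def cT_def ph_def .

lemma Cm_FF:
  assumes sg': "sg' = 1 \<or> sg' = -1"
  shows "(\<lambda>s'. indicator {1..} s' *\<^sub>R CFg x0 T t k (of_real sg' * c1 * of_real s') (tf0 f1 (omega * (of_real sg' * c1 * of_real s')))) \<in> borel_measurable borel"
proof -
  have m: "tau sg' \<in> borel_measurable borel" using sg' tau_meas by auto
  have e: "(\<lambda>s'. indicator {1..} s' *\<^sub>R CFg x0 T t k (of_real sg' * c1 * of_real s') (tf0 f1 (omega * (of_real sg' * c1 * of_real s'))))
     = (\<lambda>s'. kern k (of_real sg' * c1 * of_real s') * CFr x0 T t (of_real sg' * c1 * of_real s') (tau sg' s'))"
    by (rule ext) (simp only: CFg_ind, simp only: CFg_split tau_def)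
  show ?thesis unfolding e by (rule CFm[OF m])
qed

lemma Cm_FF1:
  assumes sg': "sg' = 1 \<or> sg' = -1"
  shows "(\<lambda>s'. indicator {1..} s' *\<^sub>R CF1g x0 T t (of_real sg' * c1 * of_real s') (tf0 f1 (omega * (of_real sg' * c1 * of_real s')))) \<in> borel_measurable borel"
proof -
  have m: "tau sg' \<in> borel_measurable borel" using sg' tau_meas by auto
  have e: "(\<lambda>s'. indicator {1..} s' *\<^sub>R CF1g x0 T t (of_real sg' * c1 * of_real s') (tf0 f1 (omega * (of_real sg' * c1 * of_real s'))))
     = (\<lambda>s'. CF1g x0 T t (of_real sg' * c1 * of_real s') (tau sg' s'))"
    by (rule ext) (simp only: CF1g_ind tau_def)
  show ?thesis unfolding e by (rule CFm1[OF m])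
qed

lemma IND: "\<forall>sg s x. (sg = 1 \<or> sg = -1) \<longrightarrow> 1 \<le> s \<longrightarrow>
  ((\<lambda>x. GG f1 x0 T x t n (of_real sg * c1 * of_real s)) has_vector_derivative DD n x (of_real sg * c1 * of_real s)) (at x)
  \<and> norm (GG f1 x0 T x t n (of_real sg * c1 * of_real s)) \<le> qq ^ n
  \<and> norm (DD n x (of_real sg * c1 * of_real s)) \<le> real n * AA * qq ^ (n - 1)"
proof (induction n)
  case 0
  then show ?case by simp
next
  case (Suc n)
  show ?case
  proof (intro allI impI)
    fix sg s x :: real
    assume sg: "sg = 1 \<or> sg = -1" and s: "1 \<le> s"
    define k where "k = of_real sg * c1 * of_real s"
    define C where "C k' = CFg x0 T t k k' (tf0 f1 (omega * k'))" for k'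
    have FFk: "FF f1 x0 T x' t k = (\<lambda>k'. exp (of_real x' * lam k') * C k')" for x' unfolding C_def by (rule FF_fun)
    have R: "((\<lambda>x. rayI sg' (\<lambda>k'. exp (of_real x * lam k') * C k' * GG f1 x0 T x t n k')) has_vector_derivative
           rayI sg' (\<lambda>k'. lam k' * (exp (of_real x * lam k') * C k') * GG f1 x0 T x t n k' + exp (of_real x * lam k') * C k' * DD n x k')) (at x)
      \<and> norm (rayI sg' (\<lambda>k'. exp (of_real x * lam k') * C k' * GG f1 x0 T x t n k')) \<le> qq ^ n * integral\<^sup>L lborel (\<lambda>s'. indicator {1..} s' * Bf s')
      \<and> norm (rayI sg' (\<lambda>k'. lam k' * (exp (of_real x * lam k') * C k') * GG f1 x0 T x t n k' + exp (of_real x * lam k') * C k' * DD n x k'))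
         \<le> qq ^ n * integral\<^sup>L lborel (\<lambda>s'. indicator {1..} s' * (s' * Bf s')) + (real n * AA * qq ^ (n - 1)) * integral\<^sup>L lborel (\<lambda>s'. indicator {1..} s' * Bf s')"
      if sg': "sg' = 1 \<or> sg' = -1" for sg'
    proof -
      note rg = ray_generic[OF sg', where C=C and G="\<lambda>x k. GG f1 x0 T x t n k" and Dg="DD n" and gB="qq ^ n" and dB="real n * AA * qq ^ (n - 1)" and B=Bf]
      have h1: "\<And>x s'. s' \<ge> 1 \<Longrightarrow> ((\<lambda>x. GG f1 x0 T x t n (of_real sg' * c1 * of_real s')) has_vector_derivative DD n x (of_real sg' * c1 * of_real s')) (at x)"
        using Suc.IH sg' by blast
      have h2: "\<And>x s'. s' \<ge> 1 \<Longrightarrow> norm (GG f1 x0 T x t n (of_real sg' * c1 * of_real s')) \<le> qq ^ n"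
        using Suc.IH sg' by blast
      have h3: "\<And>x s'. s' \<ge> 1 \<Longrightarrow> norm (DD n x (of_real sg' * c1 * of_real s')) \<le> real n * AA * qq ^ (n - 1)"
        using Suc.IH sg' by blast
      have h4: "\<And>x. (\<lambda>s'. GG f1 x0 T x t n (of_real sg' * c1 * of_real s')) \<in> borel_measurable borel"
        using MEAS by blast
      have h5: "\<And>x. (\<lambda>s'. DD n x (of_real sg' * c1 * of_real s')) \<in> borel_measurable borel"
        using MEAS by blast
      have h6: "\<And>s'. s' \<ge> 1 \<Longrightarrow> norm (C (of_real sg' * c1 * of_real s')) \<le> Bf s'"
        unfolding C_def k_def by (rule CF_Bf[OF sg sg' s])
      have h7: "(\<lambda>s'. indicator {1..} s' *\<^sub>R C (of_real sg' * c1 * of_real s')) \<in> borel_measurable borel"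
        unfolding C_def by (rule Cm_FF[OF sg'])
      show ?thesis using rg[OF h1 h2 h3 h4 h5 h6 h7 int_Bf int_sBf] by blast
    qed
    have GGS: "GG f1 x0 T x' t (Suc n) k = rayI 1 (\<lambda>k'. exp (of_real x' * lam k') * C k' * GG f1 x0 T x' t n k') + rayI (-1) (\<lambda>k'. exp (of_real x' * lam k') * C k' * GG f1 x0 T x' t n k')" for x'
      unfolding GG.simps tG_eq FFk ..
    have DDS: "DD (Suc n) x k = rayI 1 (\<lambda>k'. lam k' * (exp (of_real x * lam k') * C k') * GG f1 x0 T x t n k' + exp (of_real x * lam k') * C k' * DD n x k')
       + rayI (-1) (\<lambda>k'. lam k' * (exp (of_real x * lam k') * C k') * GG f1 x0 T x t n k' + exp (of_real x * lam k') * C k' * DD n x k')"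
      unfolding DD.simps tG_eq FFk ..
    have sp: "(1::real) = 1 \<or> (1::real) = -1" "(-1::real) = 1 \<or> (-1::real) = -1" by simp_all
    note Ra = R[OF sp(1)] and Rb = R[OF sp(2)]
    have "((\<lambda>x. GG f1 x0 T x t (Suc n) k) has_vector_derivative DD (Suc n) x k) (at x)"
      unfolding GGS DDS by (rule has_vector_derivative_add[OF Ra[THEN conjunct1] Rb[THEN conjunct1]])
    moreover have "norm (GG f1 x0 T x t (Suc n) k) \<le> qq ^ Suc n"
    proof -
      have "norm (GG f1 x0 T x t (Suc n) k) \<le> qq ^ n * integral\<^sup>L lborel (\<lambda>s'. indicator {1..} s' * Bf s') + qq ^ n * integral\<^sup>L lborel (\<lambda>s'. indicator {1..} s' * Bf s')"
        unfolding GGS by (rule order_trans[OF norm_triangle_ineq add_mono[OF Ra[THEN conjunct2, THEN conjunct1] Rb[THEN conjunct2, THEN conjunct1]]])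
      also have "\<dots> = qq ^ Suc n" unfolding qq_def by (simp add: algebra_simps)
      finally show ?thesis .
    qed
    moreover have "norm (DD (Suc n) x k) \<le> real (Suc n) * AA * qq ^ (Suc n - 1)"
    proof -
      let ?I = "integral\<^sup>L lborel (\<lambda>s'. indicator {1..} s' * Bf s')"
      let ?J = "integral\<^sup>L lborel (\<lambda>s'. indicator {1..} s' * (s' * Bf s'))"
      have "norm (DD (Suc n) x k) \<le> (qq ^ n * ?J + (real n * AA * qq ^ (n - 1)) * ?I) + (qq ^ n * ?J + (real n * AA * qq ^ (n - 1)) * ?I)"
        unfolding DDS by (rule order_trans[OF norm_triangle_ineq add_mono[OF Ra[THEN conjunct2, THEN conjunct2] Rb[THEN conjunct2, THEN conjunct2]]])
      also have "\<dots> = qq ^ n * AA + real n * AA * (qq ^ (n - 1) * qq)"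
        unfolding qq_def AA_def by (simp add: algebra_simps)
      also have "\<dots> = real (Suc n) * AA * qq ^ (Suc n - 1)"
      proof (cases n)
        case 0 then show ?thesis by simp
      next
        case (Suc m) then show ?thesis by (simp add: algebra_simps)
      qed
      finally show ?thesis .
    qed
    ultimately show "((\<lambda>x. GG f1 x0 T x t (Suc n) (of_real sg * c1 * of_real s)) has_vector_derivative DD (Suc n) x (of_real sg * c1 * of_real s)) (at x)
       \<and> norm (GG f1 x0 T x t (Suc n) (of_real sg * c1 * of_real s)) \<le> qq ^ Suc n
       \<and> norm (DD (Suc n) x (of_real sg * c1 * of_real s)) \<le> real (Suc n) * AA * qq ^ (Suc n - 1)"
      unfolding k_def by blast
  qed
qed


lemma R1_eq: "(LINT y:{1..}|lborel. exp (- ((T - t) / 4) * y\<^sup>2) * norm (of_real y * f1 (\<i> / of_real y)))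
   = integral\<^sup>L lborel (\<lambda>s. indicator {1..} s * (s * (exp (- cT * s\<^sup>2) * ph s)))"
  unfolding set_lebesgue_integral_def cT_def ph_def
  by (rule Bochner_Integration.integral_cong) (auto simp: indicator_def norm_mult)

lemma R2_eq: "(LINT y:{1..}|lborel. exp (- ((T - t) / 4) * y\<^sup>2) * norm (f1 (\<i> / of_real y)))
   = integral\<^sup>L lborel (\<lambda>s. indicator {1..} s * (exp (- cT * s\<^sup>2) * ph s))"
  unfolding set_lebesgue_integral_def cT_def ph_def
  by (rule Bochner_Integration.integral_cong) (auto simp: indicator_def)

lemma FINAL:
  assumes hj: "j > 0"
  shows "(\<lambda>x'. m1 f1 x0 T j x' t) differentiable (at x) \<and>
    norm (vector_derivative (\<lambda>x'. m1 f1 x0 T j x' t) (at x)) \<le>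
      1 / M ^ (j - 1) * (LINT y:{1..}|lborel. exp (- ((T - t) / 4) * y\<^sup>2) * norm (of_real y * f1 (\<i> / of_real y)))
      + real (j - 1) / M powr (real j - 2) *
        (LINT y:{1..}|lborel. exp (- ((T - t) / 4) * y\<^sup>2) * norm (f1 (\<i> / of_real y)))\<^sup>2"
proof -
  define C where "C k' = CF1g x0 T t k' (tf0 f1 (omega * k'))" for k'
  define R1 where "R1 = integral\<^sup>L lborel (\<lambda>s. indicator {1..} s * (s * (exp (- cT * s\<^sup>2) * ph s)))"
  define R2 where "R2 = integral\<^sup>L lborel (\<lambda>s. indicator {1..} s * (exp (- cT * s\<^sup>2) * ph s))"
  define dB where "dB = real (j - 1) * AA * qq ^ (j - 1 - 1)"
  have FF1k: "FF1 f1 x0 T x' t = (\<lambda>k'. exp (of_real x' * lam k') * C k')" for x' unfolding C_def by (rule FF1_fun)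
  have R: "((\<lambda>x. rayI sg' (\<lambda>k'. exp (of_real x * lam k') * C k' * GG f1 x0 T x t (j - 1) k')) has_vector_derivative
           rayI sg' (\<lambda>k'. lam k' * (exp (of_real x * lam k') * C k') * GG f1 x0 T x t (j - 1) k' + exp (of_real x * lam k') * C k' * DD (j - 1) x k')) (at x)
      \<and> norm (rayI sg' (\<lambda>k'. lam k' * (exp (of_real x * lam k') * C k') * GG f1 x0 T x t (j - 1) k' + exp (of_real x * lam k') * C k' * DD (j - 1) x k'))
         \<le> qq ^ (j - 1) * integral\<^sup>L lborel (\<lambda>s'. indicator {1..} s' * (s' * B1 s')) + dB * integral\<^sup>L lborel (\<lambda>s'. indicator {1..} s' * B1 s')"
    if sg': "sg' = 1 \<or> sg' = -1" for sg'
  proof -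
    note rg = ray_generic[OF sg', where C=C and G="\<lambda>x k. GG f1 x0 T x t (j - 1) k" and Dg="DD (j - 1)" and gB="qq ^ (j - 1)" and dB=dB and B=B1]
    have h1: "\<And>x s'. s' \<ge> 1 \<Longrightarrow> ((\<lambda>x. GG f1 x0 T x t (j - 1) (of_real sg' * c1 * of_real s')) has_vector_derivative DD (j - 1) x (of_real sg' * c1 * of_real s')) (at x)"
      using IND sg' by blast
    have h2: "\<And>x s'. s' \<ge> 1 \<Longrightarrow> norm (GG f1 x0 T x t (j - 1) (of_real sg' * c1 * of_real s')) \<le> qq ^ (j - 1)"
      using IND sg' by blast
    have h3: "\<And>x s'. s' \<ge> 1 \<Longrightarrow> norm (DD (j - 1) x (of_real sg' * c1 * of_real s')) \<le> dB"
      unfolding dB_def using IND sg' by blast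
    have h4: "\<And>x. (\<lambda>s'. GG f1 x0 T x t (j - 1) (of_real sg' * c1 * of_real s')) \<in> borel_measurable borel"
      using MEAS by blast
    have h5: "\<And>x. (\<lambda>s'. DD (j - 1) x (of_real sg' * c1 * of_real s')) \<in> borel_measurable borel"
      using MEAS by blast
    have h6: "\<And>s'. s' \<ge> 1 \<Longrightarrow> norm (C (of_real sg' * c1 * of_real s')) \<le> B1 s'"
      unfolding C_def by (rule CF1_B1[OF sg'])
    have h7: "(\<lambda>s'. indicator {1..} s' *\<^sub>R C (of_real sg' * c1 * of_real s')) \<in> borel_measurable borel"
      unfolding C_def by (rule Cm_FF1[OF sg'])
    show ?thesis using rg[OF h1 h2 h3 h4 h5 h6 h7 int_B1 int_sB1] by blast
  qed
  have sp: "(1::real) = 1 \<or> (1::real) = -1" "(-1::real) = 1 \<or> (-1::real) = -1" by simp_all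
  note Ra = R[OF sp(1)] and Rb = R[OF sp(2)]
  have mS: "m1 f1 x0 T j x' t = rayI 1 (\<lambda>k'. exp (of_real x' * lam k') * C k' * GG f1 x0 T x' t (j - 1) k') + rayI (-1) (\<lambda>k'. exp (of_real x' * lam k') * C k' * GG f1 x0 T x' t (j - 1) k')" for x'
    unfolding m1_def tG_eq FF1k ..
  define Dm where "Dm = rayI 1 (\<lambda>k'. lam k' * (exp (of_real x * lam k') * C k') * GG f1 x0 T x t (j - 1) k' + exp (of_real x * lam k') * C k' * DD (j - 1) x k')
       + rayI (-1) (\<lambda>k'. lam k' * (exp (of_real x * lam k') * C k') * GG f1 x0 T x t (j - 1) k' + exp (of_real x * lam k') * C k' * DD (j - 1) x k')"
  have der: "((\<lambda>x'. m1 f1 x0 T j x' t) has_vector_derivative Dm) (at x)"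
    unfolding mS Dm_def by (rule has_vector_derivative_add[OF Ra[THEN conjunct1] Rb[THEN conjunct1]])
  let ?I = "integral\<^sup>L lborel (\<lambda>s'. indicator {1..} s' * B1 s')"
  let ?J = "integral\<^sup>L lborel (\<lambda>s'. indicator {1..} s' * (s' * B1 s'))"
  have nD: "norm Dm \<le> (qq ^ (j - 1) * ?J + dB * ?I) + (qq ^ (j - 1) * ?J + dB * ?I)"
    unfolding Dm_def by (rule order_trans[OF norm_triangle_ineq add_mono[OF Ra[THEN conjunct2] Rb[THEN conjunct2]]])
  have J: "?J = R1 / pi" unfolding sB1_eq R1_def by simp
  have I: "?I = R2 / pi" unfolding B1_eq R2_def by simp
  have AAe: "AA = 3 / pi * R2" unfolding AA_def sBf_eq R2_def by simp
  have R1n: "R1 \<ge> 0" unfolding R1_def by (auto intro!: integral_nonneg_AE simp: ph_def indicator_def)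
  have R2n: "R2 \<ge> 0" unfolding R2_def by (auto intro!: integral_nonneg_AE simp: ph_def indicator_def)
  have pi3: "3 < pi" by (rule pi_gt3)
  have Mpos: "M > 0" using hM by simp
  have qM: "qq \<le> 1 / M"
  proof -
    have "3 / pi * (1 / M) \<le> 1 * (1 / M)" using pi3 Mpos by (intro mult_right_mono) auto
    then show ?thesis using qq_le by simp
  qed
  have qpow: "qq ^ n \<le> 1 / M ^ n" for n
    using power_mono[OF qM qq_nonneg, of n] by (simp add: power_divide)
  have t1: "2 * (qq ^ (j - 1) * (R1 / pi)) \<le> 1 / M ^ (j - 1) * R1"
  proof -
    have "2 * (qq ^ (j - 1) * (R1 / pi)) = (2 / pi) * (qq ^ (j - 1) * R1)" by simp
    also have "\<dots> \<le> 1 * (qq ^ (j - 1) * R1)" using pi3 R1n qq_nonneg by (intro mult_right_mono) auto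
    also have "\<dots> \<le> 1 / M ^ (j - 1) * R1"
      unfolding mult_1_left by (rule mult_right_mono[OF qpow[of "j - 1"] R1n])
    finally show ?thesis .
  qed
  have t2: "2 * (dB * (R2 / pi)) \<le> real (j - 1) / M powr (real j - 2) * R2\<^sup>2"
  proof (cases "j = 1")
    case True
    then show ?thesis unfolding dB_def by simp
  next
    case False
    then have j2: "j \<ge> 2" using hj by simp
    have pw: "M powr (real j - 2) = M ^ (j - 2)"
    proof -
      have eq: "real j - 2 = real (j - 2)" using j2 by simp
      show ?thesis by (subst eq) (rule powr_realpow[OF Mpos])
    qed
    have jj: "j - 1 - 1 = j - 2" by simp
    have "2 * (dB * (R2 / pi)) = (6 / pi\<^sup>2) * (real (j - 1) * R2\<^sup>2 * qq ^ (j - 2))"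
    proof -
      have e: "\<And>a r q :: real. 2 * (a * (3 / pi * r) * q * (r / pi)) = (6 / pi\<^sup>2) * (a * r\<^sup>2 * q)"
        unfolding power2_eq_square by (simp add: divide_inverse mult_ac)
      show ?thesis unfolding dB_def AAe jj by (rule e)
    qed
    also have "\<dots> \<le> 1 * (real (j - 1) * R2\<^sup>2 * qq ^ (j - 2))"
    proof (rule mult_right_mono)
      have "(3::real)^2 \<le> pi^2" using pi3 by (intro power_mono) auto
      then show "6 / pi\<^sup>2 \<le> 1" by (auto simp: divide_le_eq_1)
      have "0 \<le> qq ^ (j - 2)" using qq_nonneg by (rule zero_le_power)
      then show "0 \<le> real (j - 1) * R2\<^sup>2 * qq ^ (j - 2)" by (intro mult_nonneg_nonneg) auto
    qed
    also have "\<dots> \<le> real (j - 1) * R2\<^sup>2 * (1 / M ^ (j - 2))"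
    proof -
      have "0 \<le> real (j - 1) * R2\<^sup>2" by simp
      then show ?thesis unfolding mult_1_left by (rule mult_left_mono[OF qpow[of "j - 2"]])
    qed
    also have "\<dots> = real (j - 1) / M powr (real j - 2) * R2\<^sup>2" unfolding pw by simp
    finally show ?thesis .
  qed
  have lin: "\<And>Z X Y A B :: real. Z \<le> X + Y + (X + Y) \<Longrightarrow> 2 * X \<le> A \<Longrightarrow> 2 * Y \<le> B \<Longrightarrow> Z \<le> A + B" by linarith
  have "norm Dm \<le> 1 / M ^ (j - 1) * R1 + real (j - 1) / M powr (real j - 2) * R2\<^sup>2"
    by (rule lin[OF nD[unfolded J I] t1 t2])
  then show ?thesis
    using der unfolding R1_eq R2_eq R1_def[symmetric] R2_def[symmetric]
    by (auto intro: differentiableI_vector simp: vector_derivative_at[OF der])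
qed

end


theorem lemma5p2:
  fixes x0 T M :: real and f1 :: "complex \<Rightarrow> complex"
    and j :: nat and x t :: real
  assumes hT: "T > 0"
    and hM: "M \<ge> 2"
    and hzero: "\<And>s. s \<in> {1/2..1} \<Longrightarrow> f1 (\<i> * of_real s) = 0"
    and hsmooth: "smooth_on_real {0<..<1} (\<lambda>s. f1 (\<i> * of_real s))"
    and hint: "(\<integral>\<^sup>+ y\<in>{1..}. ennreal (norm (f1 (\<i> / of_real y)) / y) \<partial>lborel) \<le> ennreal (1 / M)"
    and hj: "j > 0"
    and ht: "t \<in> {0..<T}"
  shows "(\<lambda>x'. m1 f1 x0 T j x' t) differentiable (at x) \<and>
    norm (vector_derivative (\<lambda>x'. m1 f1 x0 T j x' t) (at x)) \<le>
      1 / M ^ (j - 1) * (LINT y:{1..}|lborel. exp (- ((T - t) / 4) * y\<^sup>2) * norm (of_real y * f1 (\<i> / of_real y)))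
      + real (j - 1) / M powr (real j - 2) *
        (LINT y:{1..}|lborel. exp (- ((T - t) / 4) * y\<^sup>2) * norm (f1 (\<i> / of_real y)))\<^sup>2"
proof -
  have t0: "0 \<le> t" and tT: "t < T" using ht by auto
  show ?thesis by (rule FINAL[OF hzero hsmooth t0 tT hM hint hj])
qed

end
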